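(* A finite de Morgan algebra $\mathbf{M}$ is a perfect extension of its Boolean skeleton $B(\mathbf{M})$ if and only if $\mathbf{M}$ is isomorphic to a direct product of finitely many copies of $\{0,1\}$, $\{0,a,1\}$ and $\mathbf{M}_1$.
   Context: A de Morgan algebra is an algebra $(L;\vee,\wedge,{}^\circ,0,1)$ where $(L;\vee,\wedge,0,1)$ is a bounded distributive lattice and ${}^\circ$ is a unary operation satisfying $x^{\circ\circ}=x$, $(x\wedge y)^\circ=x^\circ\vee y^\circ$, $1^\circ=0$. Its Boolean skeleton is the subalgebra $B(\mathbf{M})=\{x\in M\mid x\vee x^\circ=1\}$. An algebra $\mathbf{A}$ is a perfect extension of its subalgebra $\mathbf{B}$ if every congruence of $\mathbf{B}$ has exactly one extension to a congruence of $\mathbf{A}$. $\mathbf{M}_1$ is the four-element de Morgan algebra on $\{0,a,b,1\}$ with lattice order $0<a,b<1$ ($a,b$ incomparable) and $0^\circ=1$, $1^\circ=0$, $a^\circ=a$, $b^\circ=b$; $\{0,1\}$ and $\{0,a,1\}$ denote its subalgebras on those sets. *)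

theory Defs
  imports Main "HOL-Library.FuncSet"
begin

record 'a dm =
  carrier :: "'a set"
  join :: "'a \<Rightarrow> 'a \<Rightarrow> 'a"
  meet :: "'a \<Rightarrow> 'a \<Rightarrow> 'a"
  neg :: "'a \<Rightarrow> 'a"
  zero :: "'a"
  one :: "'a"

definition de_morgan_algebra :: "'a dm \<Rightarrow> bool" where
  "de_morgan_algebra M \<longleftrightarrow>
     (\<forall>x\<in>carrier M. \<forall>y\<in>carrier M. join M x y \<in> carrier M \<and> meet M x y \<in> carrier M) \<and>
     (\<forall>x\<in>carrier M. neg M x \<in> carrier M) \<and>
     zero M \<in> carrier M \<and> one M \<in> carrier M \<and>
     (\<forall>x\<in>carrier M. \<forall>y\<in>carrier M. \<forall>z\<in>carrier M.
        join M (join M x y) z = join M x (join M y z) \<and>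
        meet M (meet M x y) z = meet M x (meet M y z) \<and>
        meet M x (join M y z) = join M (meet M x y) (meet M x z)) \<and>
     (\<forall>x\<in>carrier M. \<forall>y\<in>carrier M.
        join M x y = join M y x \<and> meet M x y = meet M y x \<and>
        join M x (meet M x y) = x \<and> meet M x (join M x y) = x) \<and>
     (\<forall>x\<in>carrier M. join M x (zero M) = x \<and> meet M x (one M) = x) \<and>
     (\<forall>x\<in>carrier M. neg M (neg M x) = x) \<and>
     (\<forall>x\<in>carrier M. \<forall>y\<in>carrier M. neg M (meet M x y) = join M (neg M x) (neg M y)) \<and>
     neg M (one M) = zero M"

definition restrict_dm :: "'a dm \<Rightarrow> 'a set \<Rightarrow> 'a dm" where
  "restrict_dm M S = M\<lparr>carrier := S\<rparr>"

definition boolean_skeleton :: "'a dm \<Rightarrow> 'a dm" where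
  "boolean_skeleton M =
     restrict_dm M {x \<in> carrier M. join M x (neg M x) = one M}"

text \<open>Congruences: equivalence relations on the carrier compatible with all
  operations (nullary operations are trivially compatible).\<close>
definition dm_congruence :: "'a dm \<Rightarrow> ('a \<times> 'a) set \<Rightarrow> bool" where
  "dm_congruence M \<theta> \<longleftrightarrow> equiv (carrier M) \<theta> \<and>
     (\<forall>x y u v. (x, y) \<in> \<theta> \<longrightarrow> (u, v) \<in> \<theta> \<longrightarrow>
        (join M x u, join M y v) \<in> \<theta> \<and> (meet M x u, meet M y v) \<in> \<theta>) \<and>
     (\<forall>x y. (x, y) \<in> \<theta> \<longrightarrow> (neg M x, neg M y) \<in> \<theta>)"

definition perfect_extension :: "'a dm \<Rightarrow> 'a dm \<Rightarrow> bool" where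
  "perfect_extension A B \<longleftrightarrow>
     (\<forall>\<phi>. dm_congruence B \<phi> \<longrightarrow>
        (\<exists>!\<theta>. dm_congruence A \<theta> \<and> \<theta> \<inter> (carrier B \<times> carrier B) = \<phi>))"

definition dm_iso :: "'a dm \<Rightarrow> 'b dm \<Rightarrow> ('a \<Rightarrow> 'b) \<Rightarrow> bool" where
  "dm_iso M N h \<longleftrightarrow> bij_betw h (carrier M) (carrier N) \<and>
     (\<forall>x\<in>carrier M. \<forall>y\<in>carrier M.
        h (join M x y) = join N (h x) (h y) \<and> h (meet M x y) = meet N (h x) (h y)) \<and>
     (\<forall>x\<in>carrier M. h (neg M x) = neg N (h x)) \<and>
     h (zero M) = zero N \<and> h (one M) = one N"

definition dm_isomorphic :: "'a dm \<Rightarrow> 'b dm \<Rightarrow> bool" where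
  "dm_isomorphic M N \<longleftrightarrow> (\<exists>h. dm_iso M N h)"

definition dm_product :: "nat \<Rightarrow> (nat \<Rightarrow> 'a dm) \<Rightarrow> (nat \<Rightarrow> 'a) dm" where
  "dm_product n A =
     \<lparr> carrier = PiE {..<n} (\<lambda>i. carrier (A i)),
       join = (\<lambda>f g. restrict (\<lambda>i. join (A i) (f i) (g i)) {..<n}),
       meet = (\<lambda>f g. restrict (\<lambda>i. meet (A i) (f i) (g i)) {..<n}),
       neg = (\<lambda>f. restrict (\<lambda>i. neg (A i) (f i)) {..<n}),
       zero = restrict (\<lambda>i. zero (A i)) {..<n},
       one = restrict (\<lambda>i. one (A i)) {..<n} \<rparr>"

datatype m1 = E0 | Ea | Eb | E1

fun m1_join :: "m1 \<Rightarrow> m1 \<Rightarrow> m1" where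
  "m1_join E0 y = y"
| "m1_join x E0 = x"
| "m1_join E1 y = E1"
| "m1_join x E1 = E1"
| "m1_join Ea Ea = Ea"
| "m1_join Eb Eb = Eb"
| "m1_join Ea Eb = E1"
| "m1_join Eb Ea = E1"

fun m1_meet :: "m1 \<Rightarrow> m1 \<Rightarrow> m1" where
  "m1_meet E1 y = y"
| "m1_meet x E1 = x"
| "m1_meet E0 y = E0"
| "m1_meet x E0 = E0"
| "m1_meet Ea Ea = Ea"
| "m1_meet Eb Eb = Eb"
| "m1_meet Ea Eb = E0"
| "m1_meet Eb Ea = E0"

fun m1_neg :: "m1 \<Rightarrow> m1" where
  "m1_neg E0 = E1"
| "m1_neg E1 = E0"
| "m1_neg Ea = Ea"
| "m1_neg Eb = Eb"

definition M1 :: "m1 dm" where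
  "M1 = \<lparr> carrier = {E0, Ea, Eb, E1}, join = m1_join, meet = m1_meet,
          neg = m1_neg, zero = E0, one = E1 \<rparr>"

definition M1_two :: "m1 dm" where
  "M1_two = restrict_dm M1 {E0, E1}"

definition M1_three :: "m1 dm" where
  "M1_three = restrict_dm M1 {E0, Ea, E1}"

end

theory Submission
  imports Defs
begin

locale dma =
  fixes M :: "'a dm"
  assumes dm: "de_morgan_algebra M"
begin

abbreviation jn (infixl "\<squnion>" 65) where "x \<squnion> y \<equiv> join M x y"
abbreviation mt (infixl "\<sqinter>" 70) where "x \<sqinter> y \<equiv> meet M x y"
abbreviation ng ("_\<degree>" [1000] 1000) where "x\<degree> \<equiv> neg M x"
abbreviation Z ("\<zero>") where "\<zero> \<equiv> zero M"
abbreviation O ("\<one>") where "\<one> \<equiv> one M"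
abbreviation C where "C \<equiv> carrier M"

lemma j_c[simp]: "x \<in> C \<Longrightarrow> y \<in> C \<Longrightarrow> x \<squnion> y \<in> C"
  using dm unfolding de_morgan_algebra_def by blast
lemma m_c[simp]: "x \<in> C \<Longrightarrow> y \<in> C \<Longrightarrow> x \<sqinter> y \<in> C"
  using dm unfolding de_morgan_algebra_def by blast
lemma n_c[simp]: "x \<in> C \<Longrightarrow> x\<degree> \<in> C"
  using dm unfolding de_morgan_algebra_def by blast
lemma z_c[simp]: "\<zero> \<in> C"
  using dm unfolding de_morgan_algebra_def by blast
lemma o_c[simp]: "\<one> \<in> C"
  using dm unfolding de_morgan_algebra_def by blast
lemma jassoc: "x \<in> C \<Longrightarrow> y \<in> C \<Longrightarrow> z \<in> C \<Longrightarrow> x \<squnion> y \<squnion> z = x \<squnion> (y \<squnion> z)"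
  using dm unfolding de_morgan_algebra_def by blast
lemma massoc: "x \<in> C \<Longrightarrow> y \<in> C \<Longrightarrow> z \<in> C \<Longrightarrow> x \<sqinter> y \<sqinter> z = x \<sqinter> (y \<sqinter> z)"
  using dm unfolding de_morgan_algebra_def by blast
lemma dist: "x \<in> C \<Longrightarrow> y \<in> C \<Longrightarrow> z \<in> C \<Longrightarrow> x \<sqinter> (y \<squnion> z) = x \<sqinter> y \<squnion> x \<sqinter> z"
  using dm unfolding de_morgan_algebra_def by blast
lemma jcomm: "x \<in> C \<Longrightarrow> y \<in> C \<Longrightarrow> x \<squnion> y = y \<squnion> x"
  using dm unfolding de_morgan_algebra_def by blast
lemma mcomm: "x \<in> C \<Longrightarrow> y \<in> C \<Longrightarrow> x \<sqinter> y = y \<sqinter> x"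
  using dm unfolding de_morgan_algebra_def by blast
lemma abs1: "x \<in> C \<Longrightarrow> y \<in> C \<Longrightarrow> x \<squnion> (x \<sqinter> y) = x"
  using dm unfolding de_morgan_algebra_def by blast
lemma abs2: "x \<in> C \<Longrightarrow> y \<in> C \<Longrightarrow> x \<sqinter> (x \<squnion> y) = x"
  using dm unfolding de_morgan_algebra_def by blast
lemma j0[simp]: "x \<in> C \<Longrightarrow> x \<squnion> \<zero> = x"
  using dm unfolding de_morgan_algebra_def by blast
lemma m1[simp]: "x \<in> C \<Longrightarrow> x \<sqinter> \<one> = x"
  using dm unfolding de_morgan_algebra_def by blast
lemma nn[simp]: "x \<in> C \<Longrightarrow> x\<degree>\<degree> = x"
  using dm unfolding de_morgan_algebra_def by blast
lemma dmm: "x \<in> C \<Longrightarrow> y \<in> C \<Longrightarrow> (x \<sqinter> y)\<degree> = x\<degree> \<squnion> y\<degree>"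
  using dm unfolding de_morgan_algebra_def by blast
lemma n1[simp]: "\<one>\<degree> = \<zero>"
  using dm unfolding de_morgan_algebra_def by blast

lemma n0[simp]: "\<zero>\<degree> = \<one>" using nn[OF o_c] by simp

lemma dmj: "x \<in> C \<Longrightarrow> y \<in> C \<Longrightarrow> (x \<squnion> y)\<degree> = x\<degree> \<sqinter> y\<degree>"
proof -
  assume a: "x \<in> C" "y \<in> C"
  have "(x\<degree> \<sqinter> y\<degree>)\<degree> = x \<squnion> y" using a by (simp add: dmm)
  hence "(x\<degree> \<sqinter> y\<degree>)\<degree>\<degree> = (x \<squnion> y)\<degree>" by simp
  thus ?thesis using a by simp
qed

lemma jidem[simp]: "x \<in> C \<Longrightarrow> x \<squnion> x = x"
proof -
  assume a: "x \<in> C"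
  have 1: "x \<sqinter> (x \<squnion> x) = x" by (rule abs2[OF a a])
  have "x \<squnion> (x \<sqinter> (x \<squnion> x)) = x" using a by (intro abs1) simp_all
  thus ?thesis unfolding 1 .
qed
lemma midem[simp]: "x \<in> C \<Longrightarrow> x \<sqinter> x = x"
proof -
  assume a: "x \<in> C"
  have 1: "x \<squnion> (x \<sqinter> x) = x" by (rule abs1[OF a a])
  have "x \<sqinter> (x \<squnion> (x \<sqinter> x)) = x" using a by (intro abs2) simp_all
  thus ?thesis unfolding 1 .
qed
lemma zj[simp]: "x \<in> C \<Longrightarrow> \<zero> \<squnion> x = x" using jcomm[of x \<zero>] by simp
lemma om[simp]: "x \<in> C \<Longrightarrow> \<one> \<sqinter> x = x" using mcomm[of x \<one>] by simp
lemma zm[simp]: "x \<in> C \<Longrightarrow> \<zero> \<sqinter> x = \<zero>" using abs2[of \<zero> x] by simp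
lemma m0[simp]: "x \<in> C \<Longrightarrow> x \<sqinter> \<zero> = \<zero>" using mcomm[of x \<zero>] by simp
lemma oj[simp]: "x \<in> C \<Longrightarrow> \<one> \<squnion> x = \<one>" using abs1[of \<one> x] by simp
lemma j1[simp]: "x \<in> C \<Longrightarrow> x \<squnion> \<one> = \<one>" using jcomm[of x \<one>] by simp

lemma distr: "x \<in> C \<Longrightarrow> y \<in> C \<Longrightarrow> z \<in> C \<Longrightarrow> (y \<squnion> z) \<sqinter> x = y \<sqinter> x \<squnion> z \<sqinter> x"
  using dist[of x y z] mcomm[of x y] mcomm[of x z] mcomm[of x "y \<squnion> z"] by simp

lemma dist2: "x \<in> C \<Longrightarrow> y \<in> C \<Longrightarrow> z \<in> C \<Longrightarrow> x \<squnion> (y \<sqinter> z) = (x \<squnion> y) \<sqinter> (x \<squnion> z)"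
proof -
  assume c: "x \<in> C" "y \<in> C" "z \<in> C"
  have "(x \<squnion> y) \<sqinter> (x \<squnion> z) = ((x \<squnion> y) \<sqinter> x) \<squnion> ((x \<squnion> y) \<sqinter> z)" using c by (simp add: dist)
  also have "(x \<squnion> y) \<sqinter> x = x" using c mcomm[of "x \<squnion> y" x] abs2[of x y] by simp
  also have "(x \<squnion> y) \<sqinter> z = x \<sqinter> z \<squnion> y \<sqinter> z" using c by (simp add: distr)
  also have "x \<squnion> (x \<sqinter> z \<squnion> y \<sqinter> z) = x \<squnion> y \<sqinter> z" using c jassoc[of x "x \<sqinter> z" "y \<sqinter> z"] abs1[of x z] by simp
  finally show ?thesis by simp
qed

lemma dist2r: "x \<in> C \<Longrightarrow> y \<in> C \<Longrightarrow> z \<in> C \<Longrightarrow> (y \<sqinter> z) \<squnion> x = (y \<squnion> x) \<sqinter> (z \<squnion> x)"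
  using dist2[of x y z] jcomm[of x y] jcomm[of x z] jcomm[of x "y \<sqinter> z"] by simp

lemma jlc: "x \<in> C \<Longrightarrow> y \<in> C \<Longrightarrow> z \<in> C \<Longrightarrow> x \<squnion> (y \<squnion> z) = y \<squnion> (x \<squnion> z)"
  using jassoc[of x y z] jassoc[of y x z] jcomm[of x y] by simp
lemma mlc: "x \<in> C \<Longrightarrow> y \<in> C \<Longrightarrow> z \<in> C \<Longrightarrow> x \<sqinter> (y \<sqinter> z) = y \<sqinter> (x \<sqinter> z)"
  using massoc[of x y z] massoc[of y x z] mcomm[of x y] by simp

lemmas ACj = jassoc jcomm jlc
lemmas ACm = massoc mcomm mlc

definition le where "le x y \<longleftrightarrow> x \<sqinter> y = x"

lemma le_j: "x \<in> C \<Longrightarrow> y \<in> C \<Longrightarrow> le x y \<longleftrightarrow> x \<squnion> y = y"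
  unfolding le_def using abs1[of y x] abs2[of x y] jcomm[of x y] mcomm[of x y] by metis
lemma le_refl[simp]: "x \<in> C \<Longrightarrow> le x x" by (simp add: le_def)
lemma le_antisym: "x \<in> C \<Longrightarrow> y \<in> C \<Longrightarrow> le x y \<Longrightarrow> le y x \<Longrightarrow> x = y"
  unfolding le_def using mcomm[of x y] by simp
lemma le_trans: "x \<in> C \<Longrightarrow> y \<in> C \<Longrightarrow> z \<in> C \<Longrightarrow> le x y \<Longrightarrow> le y z \<Longrightarrow> le x z"
  unfolding le_def using massoc[of x y z] by simp
lemma le_0[simp]: "x \<in> C \<Longrightarrow> le \<zero> x" by (simp add: le_def)
lemma le_1[simp]: "x \<in> C \<Longrightarrow> le x \<one>" by (simp add: le_def)
lemma le_0_iff: "x \<in> C \<Longrightarrow> le x \<zero> \<longleftrightarrow> x = \<zero>" by (auto simp: le_def)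
lemma le_m_iff: "x \<in> C \<Longrightarrow> y \<in> C \<Longrightarrow> z \<in> C \<Longrightarrow> le z (x \<sqinter> y) \<longleftrightarrow> le z x \<and> le z y"
proof -
  assume a: "x \<in> C" "y \<in> C" "z \<in> C"
  show ?thesis
  proof
    assume h: "le z (x \<sqinter> y)"
    hence e: "z \<sqinter> (x \<sqinter> y) = z" by (simp add: le_def)
    have "z \<sqinter> x = z \<sqinter> (x \<sqinter> y) \<sqinter> x" using e by simp
    also have "\<dots> = z \<sqinter> (x \<sqinter> y)" using a massoc[of z "x \<sqinter> y" x] massoc[of x y x] mcomm[of y x] massoc[of x x y] by simp
    finally have 1: "le z x" using e by (simp add: le_def)
    have "z \<sqinter> y = z \<sqinter> (x \<sqinter> y) \<sqinter> y" using e by simp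
    also have "\<dots> = z \<sqinter> (x \<sqinter> y)" using a massoc[of z "x \<sqinter> y" y] massoc[of x y y] by simp
    finally have 2: "le z y" using e by (simp add: le_def)
    show "le z x \<and> le z y" using 1 2 by simp
  next
    assume "le z x \<and> le z y"
    thus "le z (x \<sqinter> y)" using a massoc[of z x y] by (simp add: le_def)
  qed
qed
lemma j_le_iff: "x \<in> C \<Longrightarrow> y \<in> C \<Longrightarrow> z \<in> C \<Longrightarrow> le (x \<squnion> y) z \<longleftrightarrow> le x z \<and> le y z"
proof -
  assume a: "x \<in> C" "y \<in> C" "z \<in> C"
  have "le (x \<squnion> y) z \<longleftrightarrow> (x \<squnion> y) \<sqinter> z = x \<squnion> y" by (simp add: le_def)
  also have "(x \<squnion> y) \<sqinter> z = x \<sqinter> z \<squnion> y \<sqinter> z" using a by (simp add: distr)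
  finally have e: "le (x \<squnion> y) z \<longleftrightarrow> x \<sqinter> z \<squnion> y \<sqinter> z = x \<squnion> y" .
  show ?thesis
  proof
    assume "le (x \<squnion> y) z"
    hence h: "x \<squnion> y = (x \<squnion> y) \<sqinter> z" by (simp add: le_def)
    have "x \<sqinter> z = x \<sqinter> ((x \<squnion> y) \<sqinter> z)" using a abs2[of x y] massoc[of x "x \<squnion> y" z] by simp
    also have "\<dots> = x" using h[symmetric] a abs2[of x y] by simp
    finally have 1: "le x z" by (simp add: le_def)
    have "y \<sqinter> z = y \<sqinter> ((x \<squnion> y) \<sqinter> z)" using a abs2[of y x] jcomm[of x y] massoc[of y "x \<squnion> y" z] by simp
    also have "\<dots> = y" using h[symmetric] a abs2[of y x] jcomm[of x y] by simp
    finally have 2: "le y z" by (simp add: le_def)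
    show "le x z \<and> le y z" using 1 2 by simp
  next
    assume "le x z \<and> le y z"
    thus "le (x \<squnion> y) z" using e by (simp add: le_def)
  qed
qed
lemma m_le1: "x \<in> C \<Longrightarrow> y \<in> C \<Longrightarrow> le (x \<sqinter> y) x" using le_m_iff[of x y "x \<sqinter> y"] by simp
lemma m_le2: "x \<in> C \<Longrightarrow> y \<in> C \<Longrightarrow> le (x \<sqinter> y) y" using le_m_iff[of x y "x \<sqinter> y"] by simp
lemma j_ge1: "x \<in> C \<Longrightarrow> y \<in> C \<Longrightarrow> le x (x \<squnion> y)" using j_le_iff[of x y "x \<squnion> y"] by simp
lemma j_ge2: "x \<in> C \<Longrightarrow> y \<in> C \<Longrightarrow> le y (x \<squnion> y)" using j_le_iff[of x y "x \<squnion> y"] by simp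
lemma neg_anti: "x \<in> C \<Longrightarrow> y \<in> C \<Longrightarrow> le x y \<Longrightarrow> le (y\<degree>) (x\<degree>)"
proof -
  assume a: "x \<in> C" "y \<in> C" "le x y"
  hence "x \<sqinter> y = x" by (simp add: le_def)
  hence "x\<degree> = x\<degree> \<squnion> y\<degree>" using a dmm[of x y] by simp
  thus ?thesis using a le_j[of "y\<degree>" "x\<degree>"] jcomm[of "x\<degree>" "y\<degree>"] by simp
qed
lemma neg_le_iff: "x \<in> C \<Longrightarrow> y \<in> C \<Longrightarrow> le (y\<degree>) (x\<degree>) \<longleftrightarrow> le x y"
  using neg_anti[of x y] neg_anti[of "y\<degree>" "x\<degree>"] by auto
lemma neg_inj: "x \<in> C \<Longrightarrow> y \<in> C \<Longrightarrow> x\<degree> = y\<degree> \<longleftrightarrow> x = y"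
  using nn[of x] nn[of y] by metis
lemma le_mI: "x \<in> C \<Longrightarrow> y \<in> C \<Longrightarrow> z \<in> C \<Longrightarrow> le z x \<Longrightarrow> le z y \<Longrightarrow> le z (x \<sqinter> y)"
  using le_m_iff by blast
lemma le_jI: "x \<in> C \<Longrightarrow> y \<in> C \<Longrightarrow> z \<in> C \<Longrightarrow> le x z \<Longrightarrow> le y z \<Longrightarrow> le (x \<squnion> y) z"
  using j_le_iff by blast


subsection \<open>Boolean elements\<close>

definition bel where "bel x \<longleftrightarrow> x \<in> C \<and> x \<squnion> x\<degree> = \<one>"

lemma bel_C: "bel x \<Longrightarrow> x \<in> C" by (simp add: bel_def)
lemma bel_jn: "bel x \<Longrightarrow> x \<squnion> x\<degree> = \<one>" by (simp add: bel_def)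
lemma bel_mt: "bel x \<Longrightarrow> x \<sqinter> x\<degree> = \<zero>"
proof -
  assume b: "bel x"
  hence c: "x \<in> C" by (rule bel_C)
  have "(x \<squnion> x\<degree>)\<degree> = \<zero>" using b by (simp add: bel_def)
  hence "x\<degree> \<sqinter> x = \<zero>" using c dmj[of x "x\<degree>"] by simp
  thus ?thesis using c mcomm[of x "x\<degree>"] by simp
qed
lemma bel_0[simp]: "bel \<zero>" by (simp add: bel_def)
lemma bel_1[simp]: "bel \<one>" by (simp add: bel_def)
lemma bel_n: "bel x \<Longrightarrow> bel (x\<degree>)"
  unfolding bel_def using jcomm[of x "x\<degree>"] by auto
lemma bel_j: "bel x \<Longrightarrow> bel y \<Longrightarrow> bel (x \<squnion> y)"
proof -
  assume bx: "bel x" and by': "bel y"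
  have c: "x \<in> C" "y \<in> C" using bx by' bel_C by auto
  have "(x \<squnion> y) \<squnion> (x \<squnion> y)\<degree> = (x \<squnion> y) \<squnion> (x\<degree> \<sqinter> y\<degree>)" using c by (simp add: dmj)
  also have "\<dots> = (x \<squnion> y \<squnion> x\<degree>) \<sqinter> (x \<squnion> y \<squnion> y\<degree>)" using c by (simp add: dist2)
  also have "x \<squnion> y \<squnion> x\<degree> = \<one>" using c bel_jn[OF bx] jassoc[of x y "x\<degree>"] jlc[of y x "x\<degree>"] by simp
  also have "x \<squnion> y \<squnion> y\<degree> = \<one>" using c bel_jn[OF by'] jassoc[of x y "y\<degree>"] by simp
  finally show ?thesis using c by (simp add: bel_def)
qed
lemma bel_m: "bel x \<Longrightarrow> bel y \<Longrightarrow> bel (x \<sqinter> y)"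
proof -
  assume bx: "bel x" and by': "bel y"
  have c: "x \<in> C" "y \<in> C" using bx by' bel_C by auto
  have "bel ((x\<degree> \<squnion> y\<degree>)\<degree>)" using bx by' by (intro bel_n bel_j) (simp_all add: bel_n)
  thus ?thesis using c by (simp add: dmj)
qed

lemma symd_join: "bel x \<Longrightarrow> y \<in> C \<Longrightarrow> x \<squnion> ((x \<sqinter> y\<degree>) \<squnion> (x\<degree> \<sqinter> y)) = x \<squnion> y"
proof -
  assume bx: "bel x" and cy: "y \<in> C"
  have c: "x \<in> C" using bx bel_C by auto
  have "x \<squnion> ((x \<sqinter> y\<degree>) \<squnion> (x\<degree> \<sqinter> y)) = (x \<squnion> (x \<sqinter> y\<degree>)) \<squnion> (x\<degree> \<sqinter> y)"
    using c cy by (simp add: jassoc)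
  also have "\<dots> = x \<squnion> (x\<degree> \<sqinter> y)" using c cy by (simp add: abs1)
  also have "\<dots> = (x \<squnion> x\<degree>) \<sqinter> (x \<squnion> y)" using c cy by (simp add: dist2)
  also have "\<dots> = x \<squnion> y" using c cy bel_jn[OF bx] by simp
  finally show ?thesis .
qed

lemma symd_rel:
  assumes xy: "(x,y) \<in> R" and bx: "bel x" and by': "bel y"
    and refl: "\<And>z. bel z \<Longrightarrow> (z,z) \<in> R"
    and sym: "\<And>a b. (a,b) \<in> R \<Longrightarrow> (b,a) \<in> R"
    and cj: "\<And>a b c d. (a,b) \<in> R \<Longrightarrow> (c,d) \<in> R \<Longrightarrow> (a \<squnion> c, b \<squnion> d) \<in> R"
    and cm: "\<And>a b c d. (a,b) \<in> R \<Longrightarrow> (c,d) \<in> R \<Longrightarrow> (a \<sqinter> c, b \<sqinter> d) \<in> R"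
  shows "((x \<sqinter> y\<degree>) \<squnion> (x\<degree> \<sqinter> y), \<zero>) \<in> R"
proof -
  have c: "x \<in> C" "y \<in> C" using bx by' bel_C by auto
  have 1: "(x \<sqinter> y\<degree>, y \<sqinter> y\<degree>) \<in> R" using cm[OF xy refl[OF bel_n[OF by']]] .
  have 2: "(x\<degree> \<sqinter> y, x\<degree> \<sqinter> x) \<in> R" using cm[OF refl[OF bel_n[OF bx]] sym[OF xy]] .
  have 3: "((x \<sqinter> y\<degree>) \<squnion> (x\<degree> \<sqinter> y), (y \<sqinter> y\<degree>) \<squnion> (x\<degree> \<sqinter> x)) \<in> R" using cj[OF 1 2] .
  have "y \<sqinter> y\<degree> = \<zero>" using bel_mt[OF by'] .
  moreover have "x\<degree> \<sqinter> x = \<zero>" using bel_mt[OF bx] c mcomm[of x "x\<degree>"] by simp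
  ultimately show ?thesis using 3 by simp
qed

lemma negj: "bel e \<Longrightarrow> x \<in> C \<Longrightarrow> x\<degree> \<squnion> e = (x \<squnion> e)\<degree> \<squnion> e"
proof -
  assume be: "bel e" and cx: "x \<in> C"
  have c: "e \<in> C" using be bel_C by auto
  have "(x \<squnion> e)\<degree> \<squnion> e = (x\<degree> \<sqinter> e\<degree>) \<squnion> e" using c cx by (simp add: dmj)
  also have "\<dots> = (x\<degree> \<squnion> e) \<sqinter> (e\<degree> \<squnion> e)" using c cx by (simp add: dist2r)
  also have "e\<degree> \<squnion> e = \<one>" using bel_jn[OF be] c jcomm[of e "e\<degree>"] by simp
  finally show ?thesis using c cx by simp
qed

subsection \<open>Congruences generated by Boolean ideals\<close>

lemma congD:
  assumes h: "dm_congruence M \<theta>"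
  shows "\<theta> \<subseteq> C \<times> C" "\<And>x. x \<in> C \<Longrightarrow> (x,x) \<in> \<theta>"
    "\<And>x y. (x,y) \<in> \<theta> \<Longrightarrow> (y,x) \<in> \<theta>"
    "\<And>x y z. (x,y) \<in> \<theta> \<Longrightarrow> (y,z) \<in> \<theta> \<Longrightarrow> (x,z) \<in> \<theta>"
    "\<And>x y u v. (x,y) \<in> \<theta> \<Longrightarrow> (u,v) \<in> \<theta> \<Longrightarrow> (x \<squnion> u, y \<squnion> v) \<in> \<theta>"
    "\<And>x y u v. (x,y) \<in> \<theta> \<Longrightarrow> (u,v) \<in> \<theta> \<Longrightarrow> (x \<sqinter> u, y \<sqinter> v) \<in> \<theta>"
    "\<And>x y. (x,y) \<in> \<theta> \<Longrightarrow> (x\<degree>, y\<degree>) \<in> \<theta>"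
proof -
  have eq: "equiv C \<theta>" using h unfolding dm_congruence_def by simp
  have r: "refl_on C \<theta>" and s: "sym \<theta>" and t: "trans \<theta>" and sub: "\<theta> \<subseteq> C \<times> C"
    using eq by (simp_all add: equiv_def)
  show "\<theta> \<subseteq> C \<times> C" using sub .
  show "\<And>x. x \<in> C \<Longrightarrow> (x,x) \<in> \<theta>" using r by (simp add: refl_on_def)
  show "\<And>x y. (x,y) \<in> \<theta> \<Longrightarrow> (y,x) \<in> \<theta>" using s by (rule symD)
  show "\<And>x y z. (x,y) \<in> \<theta> \<Longrightarrow> (y,z) \<in> \<theta> \<Longrightarrow> (x,z) \<in> \<theta>" using t by (rule transD)
  have c: "\<forall>x y u v. (x, y) \<in> \<theta> \<longrightarrow> (u, v) \<in> \<theta> \<longrightarrow>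
        (x \<squnion> u, y \<squnion> v) \<in> \<theta> \<and> (x \<sqinter> u, y \<sqinter> v) \<in> \<theta>"
    and n: "\<forall>x y. (x, y) \<in> \<theta> \<longrightarrow> (x\<degree>, y\<degree>) \<in> \<theta>" using h unfolding dm_congruence_def by simp_all
  show "\<And>x y u v. (x,y) \<in> \<theta> \<Longrightarrow> (u,v) \<in> \<theta> \<Longrightarrow> (x \<squnion> u, y \<squnion> v) \<in> \<theta>" using c by blast
  show "\<And>x y u v. (x,y) \<in> \<theta> \<Longrightarrow> (u,v) \<in> \<theta> \<Longrightarrow> (x \<sqinter> u, y \<sqinter> v) \<in> \<theta>" using c by blast
  show "\<And>x y. (x,y) \<in> \<theta> \<Longrightarrow> (x\<degree>, y\<degree>) \<in> \<theta>" using n by blast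
qed

lemma congI:
  assumes a1: "\<theta> \<subseteq> C \<times> C" and a2: "\<And>x. x \<in> C \<Longrightarrow> (x,x) \<in> \<theta>"
    and a3: "\<And>x y. (x,y) \<in> \<theta> \<Longrightarrow> (y,x) \<in> \<theta>"
    and a4: "\<And>x y z. (x,y) \<in> \<theta> \<Longrightarrow> (y,z) \<in> \<theta> \<Longrightarrow> (x,z) \<in> \<theta>"
    and a5: "\<And>x y u v. (x,y) \<in> \<theta> \<Longrightarrow> (u,v) \<in> \<theta> \<Longrightarrow> (x \<squnion> u, y \<squnion> v) \<in> \<theta>"
    and a6: "\<And>x y u v. (x,y) \<in> \<theta> \<Longrightarrow> (u,v) \<in> \<theta> \<Longrightarrow> (x \<sqinter> u, y \<sqinter> v) \<in> \<theta>"
    and a7: "\<And>x y. (x,y) \<in> \<theta> \<Longrightarrow> (x\<degree>, y\<degree>) \<in> \<theta>"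
  shows "dm_congruence M \<theta>"
proof -
  have "refl_on C \<theta>" using a2 by (simp add: refl_on_def)
  moreover have "sym \<theta>" using a3 by (simp add: sym_def)
  moreover have "trans \<theta>" using a4 by (meson transI)
  ultimately have "equiv C \<theta>" using a1 by (simp add: equiv_def)
  thus ?thesis unfolding dm_congruence_def using a5 a6 a7 by simp
qed

definition gen where "gen I = {(x,y). x \<in> C \<and> y \<in> C \<and> (\<exists>e\<in>I. x \<squnion> e = y \<squnion> e)}"

lemma gen_cong:
  assumes bI: "\<And>e. e \<in> I \<Longrightarrow> bel e" and zI: "\<zero> \<in> I"
    and jI: "\<And>e f. e \<in> I \<Longrightarrow> f \<in> I \<Longrightarrow> e \<squnion> f \<in> I"
  shows "dm_congruence M (gen I)"
proof (rule congI)
  show "gen I \<subseteq> C \<times> C" by (auto simp: gen_def)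
  show "\<And>x. x \<in> C \<Longrightarrow> (x,x) \<in> gen I" using zI by (auto simp: gen_def)
  show "\<And>x y. (x,y) \<in> gen I \<Longrightarrow> (y,x) \<in> gen I"
  proof -
    fix x y assume "(x,y) \<in> gen I"
    then obtain e where h: "x \<in> C" "y \<in> C" "e \<in> I" "x \<squnion> e = y \<squnion> e" by (auto simp: gen_def)
    have "\<exists>e\<in>I. y \<squnion> e = x \<squnion> e" using h(3,4) by (intro bexI[of _ e]) simp_all
    thus "(y,x) \<in> gen I" unfolding gen_def using h by simp
  qed
  have two: "x \<squnion> (e \<squnion> f) = y \<squnion> (e \<squnion> f)"
    if "x \<squnion> e = y \<squnion> e" "x \<in> C" "y \<in> C" "e \<in> C" "f \<in> C" for x y e f
    using that jassoc[of x e f] jassoc[of y e f] by simp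
  show "\<And>x y z. (x,y) \<in> gen I \<Longrightarrow> (y,z) \<in> gen I \<Longrightarrow> (x,z) \<in> gen I"
  proof -
    fix x y z assume "(x,y) \<in> gen I" "(y,z) \<in> gen I"
    then obtain e f where e: "e \<in> I" "x \<squnion> e = y \<squnion> e" and f: "f \<in> I" "y \<squnion> f = z \<squnion> f"
      and c: "x \<in> C" "y \<in> C" "z \<in> C" by (auto simp: gen_def)
    have ce: "e \<in> C" "f \<in> C" using e f bI bel_C by auto
    have "x \<squnion> (e \<squnion> f) = y \<squnion> (e \<squnion> f)" using two[OF e(2)] c ce by simp
    also have "\<dots> = z \<squnion> (e \<squnion> f)" using two[OF f(2)] c ce jcomm[of e f] by simp
    finally show "(x,z) \<in> gen I" using c jI[OF e(1) f(1)] by (auto simp: gen_def)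
  qed
  show "\<And>x y u v. (x,y) \<in> gen I \<Longrightarrow> (u,v) \<in> gen I \<Longrightarrow> (x \<squnion> u, y \<squnion> v) \<in> gen I"
  proof -
    fix x y u v assume "(x,y) \<in> gen I" "(u,v) \<in> gen I"
    then obtain e f where e: "e \<in> I" "x \<squnion> e = y \<squnion> e" and f: "f \<in> I" "u \<squnion> f = v \<squnion> f"
      and c: "x \<in> C" "y \<in> C" "u \<in> C" "v \<in> C" by (auto simp: gen_def)
    have ce: "e \<in> C" "f \<in> C" using e f bI bel_C by auto
    have A: "x \<squnion> (e \<squnion> f) = y \<squnion> (e \<squnion> f)" using two[OF e(2)] c ce by simp
    have B: "u \<squnion> (e \<squnion> f) = v \<squnion> (e \<squnion> f)" using two[OF f(2)] c ce jcomm[of e f] by simp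
    have D: "(a \<squnion> b) \<squnion> g = (a \<squnion> g) \<squnion> (b \<squnion> g)" if "a \<in> C" "b \<in> C" "g \<in> C" for a b g
      using that jassoc[of a g "b \<squnion> g"] jlc[of g b g] jassoc[of b g g] jassoc[of a b g] by simp
    have "(x \<squnion> u) \<squnion> (e \<squnion> f) = (y \<squnion> v) \<squnion> (e \<squnion> f)"
      using D[of x u "e \<squnion> f"] D[of y v "e \<squnion> f"] A B c ce by simp
    thus "(x \<squnion> u, y \<squnion> v) \<in> gen I" using c jI[OF e(1) f(1)] by (auto simp: gen_def)
  qed
  show "\<And>x y u v. (x,y) \<in> gen I \<Longrightarrow> (u,v) \<in> gen I \<Longrightarrow> (x \<sqinter> u, y \<sqinter> v) \<in> gen I"
  proof -
    fix x y u v assume "(x,y) \<in> gen I" "(u,v) \<in> gen I"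
    then obtain e f where e: "e \<in> I" "x \<squnion> e = y \<squnion> e" and f: "f \<in> I" "u \<squnion> f = v \<squnion> f"
      and c: "x \<in> C" "y \<in> C" "u \<in> C" "v \<in> C" by (auto simp: gen_def)
    have ce: "e \<in> C" "f \<in> C" using e f bI bel_C by auto
    have A: "x \<squnion> (e \<squnion> f) = y \<squnion> (e \<squnion> f)" using two[OF e(2)] c ce by simp
    have B: "u \<squnion> (e \<squnion> f) = v \<squnion> (e \<squnion> f)" using two[OF f(2)] c ce jcomm[of e f] by simp
    have "(x \<sqinter> u) \<squnion> (e \<squnion> f) = (y \<sqinter> v) \<squnion> (e \<squnion> f)"
      using dist2r[of "e \<squnion> f" x u] dist2r[of "e \<squnion> f" y v] A B c ce by simp
    thus "(x \<sqinter> u, y \<sqinter> v) \<in> gen I" using c jI[OF e(1) f(1)] by (auto simp: gen_def)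
  qed
  show "\<And>x y. (x,y) \<in> gen I \<Longrightarrow> (x\<degree>, y\<degree>) \<in> gen I"
  proof -
    fix x y assume "(x,y) \<in> gen I"
    then obtain e where e: "e \<in> I" "x \<squnion> e = y \<squnion> e" and c: "x \<in> C" "y \<in> C"
      by (auto simp: gen_def)
    have "x\<degree> \<squnion> e = y\<degree> \<squnion> e" using negj[OF bI[OF e(1)] c(1)] negj[OF bI[OF e(1)] c(2)] e(2) by simp
    thus "(x\<degree>, y\<degree>) \<in> gen I" using c e by (auto simp: gen_def)
  qed
qed

definition thI where "thI \<theta> = gen {e. bel e \<and> (e, \<zero>) \<in> \<theta>}"

lemma thI_cong: "dm_congruence M \<theta> \<Longrightarrow> dm_congruence M (thI \<theta>)"
  unfolding thI_def
proof (rule gen_cong)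
  assume h: "dm_congruence M \<theta>"
  show "\<zero> \<in> {e. bel e \<and> (e, \<zero>) \<in> \<theta>}" using congD(2)[OF h] by simp
  show "\<And>e f. e \<in> {e. bel e \<and> (e, \<zero>) \<in> \<theta>} \<Longrightarrow> f \<in> {e. bel e \<and> (e, \<zero>) \<in> \<theta>}
     \<Longrightarrow> e \<squnion> f \<in> {e. bel e \<and> (e, \<zero>) \<in> \<theta>}"
  proof -
    fix e f assume "e \<in> {e. bel e \<and> (e, \<zero>) \<in> \<theta>}" "f \<in> {e. bel e \<and> (e, \<zero>) \<in> \<theta>}"
    hence "bel e" "bel f" "(e, \<zero>) \<in> \<theta>" "(f, \<zero>) \<in> \<theta>" by auto
    thus "e \<squnion> f \<in> {e. bel e \<and> (e, \<zero>) \<in> \<theta>}" using congD(5)[OF h, of e \<zero> f \<zero>] bel_j by simp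
  qed
qed auto

lemma gen_sub:
  assumes h: "dm_congruence M \<theta>" and I: "\<And>e. e \<in> I \<Longrightarrow> (e, \<zero>) \<in> \<theta>"
  shows "gen I \<subseteq> \<theta>"
proof
  fix p assume "p \<in> gen I"
  then obtain x y e where p: "p = (x,y)" and c: "x \<in> C" "y \<in> C" and e: "e \<in> I" "x \<squnion> e = y \<squnion> e"
    by (auto simp: gen_def)
  have "(x \<squnion> \<zero>, x \<squnion> e) \<in> \<theta>" using congD(5)[OF h congD(2)[OF h c(1)] congD(3)[OF h I[OF e(1)]]] .
  hence 1: "(x, y \<squnion> e) \<in> \<theta>" using c e by simp
  have "(y \<squnion> e, y \<squnion> \<zero>) \<in> \<theta>" using congD(5)[OF h congD(2)[OF h c(2)] I[OF e(1)]] .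
  hence "(y \<squnion> e, y) \<in> \<theta>" using c by simp
  thus "p \<in> \<theta>" using congD(4)[OF h 1] p by simp
qed

lemma thI_sub: "dm_congruence M \<theta> \<Longrightarrow> thI \<theta> \<subseteq> \<theta>"
  unfolding thI_def by (rule gen_sub) auto

definition allgen where "allgen \<longleftrightarrow> (\<forall>\<theta>. dm_congruence M \<theta> \<longrightarrow> \<theta> \<subseteq> thI \<theta>)"

lemma bs_simps[simp]: "carrier (boolean_skeleton M) = {x. bel x}"
  "join (boolean_skeleton M) = join M" "meet (boolean_skeleton M) = meet M"
  "neg (boolean_skeleton M) = neg M"
  by (auto simp: boolean_skeleton_def restrict_dm_def bel_def)

lemma perfect_iff: "perfect_extension M (boolean_skeleton M) \<longleftrightarrow> allgen"
proof
  assume P: "perfect_extension M (boolean_skeleton M)"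
  show allgen unfolding allgen_def
  proof (intro allI impI)
    fix \<theta> assume h: "dm_congruence M \<theta>"
    let ?B = "{x. bel x}"
    let ?\<phi> = "\<theta> \<inter> (?B \<times> ?B)"
    have "dm_congruence (boolean_skeleton M) ?\<phi>"
    proof -
      have "equiv ?B ?\<phi>"
      proof (rule equivI)
        show "?\<phi> \<subseteq> ?B \<times> ?B" by blast
        show "refl_on ?B ?\<phi>" unfolding refl_on_def using congD(2)[OF h] bel_C by blast
        show "sym ?\<phi>" unfolding sym_def using congD(3)[OF h] by blast
        show "trans ?\<phi>" unfolding trans_def using congD(4)[OF h] by blast
      qed
      moreover have "\<forall>x y u v. (x, y) \<in> ?\<phi> \<longrightarrow> (u, v) \<in> ?\<phi> \<longrightarrow>
        (x \<squnion> u, y \<squnion> v) \<in> ?\<phi> \<and> (x \<sqinter> u, y \<sqinter> v) \<in> ?\<phi>"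
      proof (intro allI impI)
        fix x y u v assume a: "(x, y) \<in> ?\<phi>" "(u, v) \<in> ?\<phi>"
        hence "bel x" "bel y" "bel u" "bel v" "(x, y) \<in> \<theta>" "(u, v) \<in> \<theta>" by auto
        thus "(x \<squnion> u, y \<squnion> v) \<in> ?\<phi> \<and> (x \<sqinter> u, y \<sqinter> v) \<in> ?\<phi>"
          using congD(5,6)[OF h] bel_j bel_m by simp
      qed
      moreover have "\<forall>x y. (x, y) \<in> ?\<phi> \<longrightarrow> (x\<degree>, y\<degree>) \<in> ?\<phi>"
        using congD(7)[OF h] bel_n by simp
      ultimately show ?thesis unfolding dm_congruence_def bs_simps by blast
    qed
    define Q where "Q t \<longleftrightarrow> dm_congruence M t \<and> t \<inter> (?B \<times> ?B) = ?\<phi>" for t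
    from P \<open>dm_congruence (boolean_skeleton M) ?\<phi>\<close> have ex1: "\<exists>!t. Q t"
      unfolding perfect_extension_def Q_def by simp
    obtain \<theta>' where u0: "\<forall>t. Q t \<longrightarrow> t = \<theta>'"
      using ex1 unfolding Ex1_def by blast
    have u: "t = \<theta>'" if "dm_congruence M t" "t \<inter> (?B \<times> ?B) = ?\<phi>" for t
    proof -
      have "Q t" unfolding Q_def using that by simp
      thus ?thesis using u0 by (rule_tac mp[OF spec[OF u0]])
    qed
    have e1: "\<theta> = \<theta>'" by (rule u) (simp_all add: h)
    have "thI \<theta> \<inter> (?B \<times> ?B) = ?\<phi>"
    proof
      show "thI \<theta> \<inter> (?B \<times> ?B) \<subseteq> ?\<phi>" using thI_sub[OF h] by auto
      show "?\<phi> \<subseteq> thI \<theta> \<inter> (?B \<times> ?B)"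
      proof
        fix p assume "p \<in> ?\<phi>"
        then obtain x y where p: "p = (x,y)" "(x,y) \<in> \<theta>" "bel x" "bel y" by auto
        have c: "x \<in> C" "y \<in> C" using p bel_C by auto
        let ?e = "(x \<sqinter> y\<degree>) \<squnion> (x\<degree> \<sqinter> y)"
        have be: "bel ?e" using p by (intro bel_j bel_m bel_n) simp_all
        have e0: "(?e, \<zero>) \<in> \<theta>"
          by (rule symd_rel[OF p(2) p(3) p(4)], rule congD(2)[OF h bel_C], assumption,
              erule congD(3)[OF h], erule (1) congD(5)[OF h], erule (1) congD(6)[OF h])
        have "?e = (x\<degree> \<sqinter> y) \<squnion> (x \<sqinter> y\<degree>)" using c jcomm[of "x \<sqinter> y\<degree>" "x\<degree> \<sqinter> y"] by simp
        also have "\<dots> = (y \<sqinter> x\<degree>) \<squnion> (y\<degree> \<sqinter> x)" using c mcomm[of "x\<degree>" y] mcomm[of x "y\<degree>"] by simp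
        finally have "?e = (y \<sqinter> x\<degree>) \<squnion> (y\<degree> \<sqinter> x)" .
        hence "x \<squnion> ?e = y \<squnion> ?e" using symd_join[OF p(3) c(2)] symd_join[OF p(4) c(1)] c jcomm[of x y] by simp
        thus "p \<in> thI \<theta> \<inter> (?B \<times> ?B)" using p c be e0 by (auto simp: thI_def gen_def)
      qed
    qed
    hence "thI \<theta> = \<theta>'" by (intro u thI_cong[OF h])
    thus "\<theta> \<subseteq> thI \<theta>" using e1 by simp
  qed
next
  assume A: allgen
  show "perfect_extension M (boolean_skeleton M)" unfolding perfect_extension_def
  proof (intro allI impI)
    fix \<phi> assume h: "dm_congruence (boolean_skeleton M) \<phi>"
    let ?B = "{x. bel x}"
    have phB: "\<phi> \<subseteq> ?B \<times> ?B" and phr: "\<And>x. bel x \<Longrightarrow> (x,x) \<in> \<phi>"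
      and phs: "\<And>x y. (x,y) \<in> \<phi> \<Longrightarrow> (y,x) \<in> \<phi>"
      and pht: "\<And>x y z. (x,y) \<in> \<phi> \<Longrightarrow> (y,z) \<in> \<phi> \<Longrightarrow> (x,z) \<in> \<phi>"
      and phj: "\<And>x y u v. (x,y) \<in> \<phi> \<Longrightarrow> (u,v) \<in> \<phi> \<Longrightarrow> (x \<squnion> u, y \<squnion> v) \<in> \<phi>"
      and phm: "\<And>x y u v. (x,y) \<in> \<phi> \<Longrightarrow> (u,v) \<in> \<phi> \<Longrightarrow> (x \<sqinter> u, y \<sqinter> v) \<in> \<phi>"
     
    proof -
      have eq: "equiv ?B \<phi>" using h unfolding dm_congruence_def by simp
      have r: "refl_on ?B \<phi>" and s: "sym \<phi>" and t: "trans \<phi>" and sub: "\<phi> \<subseteq> ?B \<times> ?B"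
        using eq by (simp_all add: equiv_def)
      show "\<phi> \<subseteq> ?B \<times> ?B" using sub .
      show "\<And>x. bel x \<Longrightarrow> (x,x) \<in> \<phi>" using r by (simp add: refl_on_def)
      show "\<And>x y. (x,y) \<in> \<phi> \<Longrightarrow> (y,x) \<in> \<phi>" using s by (rule symD)
      show "\<And>x y z. (x,y) \<in> \<phi> \<Longrightarrow> (y,z) \<in> \<phi> \<Longrightarrow> (x,z) \<in> \<phi>" using t by (rule transD)
      have c: "\<forall>x y u v. (x, y) \<in> \<phi> \<longrightarrow> (u, v) \<in> \<phi> \<longrightarrow>
        (x \<squnion> u, y \<squnion> v) \<in> \<phi> \<and> (x \<sqinter> u, y \<sqinter> v) \<in> \<phi>"
        using h unfolding dm_congruence_def by simp
      show "\<And>x y u v. (x,y) \<in> \<phi> \<Longrightarrow> (u,v) \<in> \<phi> \<Longrightarrow> (x \<squnion> u, y \<squnion> v) \<in> \<phi>" using c by blast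
      show "\<And>x y u v. (x,y) \<in> \<phi> \<Longrightarrow> (u,v) \<in> \<phi> \<Longrightarrow> (x \<sqinter> u, y \<sqinter> v) \<in> \<phi>" using c by blast
    qed
    let ?I = "{e. bel e \<and> (e, \<zero>) \<in> \<phi>}"
    have gc: "dm_congruence M (gen ?I)"
     
    proof (rule gen_cong)
      fix e f assume "e \<in> ?I" "f \<in> ?I"
      hence "bel e" "bel f" "(e, \<zero>) \<in> \<phi>" "(f, \<zero>) \<in> \<phi>" by auto
      thus "e \<squnion> f \<in> ?I" using phj[of e \<zero> f \<zero>] bel_j by simp
    qed (use phr in auto)
    have restr: "gen ?I \<inter> (?B \<times> ?B) = \<phi>"
    proof
      show "gen ?I \<inter> (?B \<times> ?B) \<subseteq> \<phi>"
      proof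
        fix p assume "p \<in> gen ?I \<inter> (?B \<times> ?B)"
        then obtain x y e where p: "p = (x,y)" "bel x" "bel y" and e: "bel e" "(e,\<zero>) \<in> \<phi>" "x \<squnion> e = y \<squnion> e"
          by (auto simp: gen_def)
        have c: "x \<in> C" "y \<in> C" using p bel_C by auto
        have "(x \<squnion> \<zero>, x \<squnion> e) \<in> \<phi>" using phj[OF phr[OF p(2)] phs[OF e(2)]] .
        hence 1: "(x, y \<squnion> e) \<in> \<phi>" using c e by simp
        have "(y \<squnion> e, y \<squnion> \<zero>) \<in> \<phi>" using phj[OF phr[OF p(3)] e(2)] .
        hence "(y \<squnion> e, y) \<in> \<phi>" using c by simp
        thus "p \<in> \<phi>" using pht[OF 1] p by simp
      qed
      show "\<phi> \<subseteq> gen ?I \<inter> (?B \<times> ?B)"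
      proof
        fix p assume pp: "p \<in> \<phi>"
        then obtain x y where p: "p = (x,y)" "(x,y) \<in> \<phi>" "bel x" "bel y" using phB by auto
        have c: "x \<in> C" "y \<in> C" using p bel_C by auto
        let ?e = "(x \<sqinter> y\<degree>) \<squnion> (x\<degree> \<sqinter> y)"
        have be: "bel ?e" using p by (intro bel_j bel_m bel_n) simp_all
        have e0: "(?e, \<zero>) \<in> \<phi>"
          by (rule symd_rel[OF p(2) p(3) p(4)], erule phr, erule phs, erule (1) phj, erule (1) phm)
        have "?e = (x\<degree> \<sqinter> y) \<squnion> (x \<sqinter> y\<degree>)" using c jcomm[of "x \<sqinter> y\<degree>" "x\<degree> \<sqinter> y"] by simp
        also have "\<dots> = (y \<sqinter> x\<degree>) \<squnion> (y\<degree> \<sqinter> x)" using c mcomm[of "x\<degree>" y] mcomm[of x "y\<degree>"] by simp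
        finally have "?e = (y \<sqinter> x\<degree>) \<squnion> (y\<degree> \<sqinter> x)" .
        hence "x \<squnion> ?e = y \<squnion> ?e" using symd_join[OF p(3) c(2)] symd_join[OF p(4) c(1)] c jcomm[of x y] by simp
        thus "p \<in> gen ?I \<inter> (?B \<times> ?B)" using p c be e0 by (auto simp: gen_def)
      qed
    qed
    show "\<exists>!\<theta>. dm_congruence M \<theta> \<and> \<theta> \<inter> (carrier (boolean_skeleton M) \<times> carrier (boolean_skeleton M)) = \<phi>"
    proof (rule ex1I[of _ "gen ?I"])
      show "dm_congruence M (gen ?I) \<and> gen ?I \<inter> (carrier (boolean_skeleton M) \<times> carrier (boolean_skeleton M)) = \<phi>"
        using gc restr by simp
    next
      fix \<theta> assume t: "dm_congruence M \<theta> \<and> \<theta> \<inter> (carrier (boolean_skeleton M) \<times> carrier (boolean_skeleton M)) = \<phi>"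
      hence t1: "dm_congruence M \<theta>" and t2: "\<theta> \<inter> (?B \<times> ?B) = \<phi>" by auto
      have I: "{e. bel e \<and> (e, \<zero>) \<in> \<theta>} = ?I" using t2 by auto
      have "\<theta> \<subseteq> thI \<theta>" using A t1 unfolding allgen_def by auto
      moreover have "thI \<theta> \<subseteq> \<theta>" using thI_sub[OF t1] .
      ultimately show "\<theta> = gen ?I" unfolding thI_def I by auto
    qed
  qed
qed

end

primrec bj :: "'a dm \<Rightarrow> (nat \<Rightarrow> 'a) \<Rightarrow> nat \<Rightarrow> 'a" where
  "bj M f 0 = zero M"
| "bj M f (Suc k) = join M (bj M f k) (f k)"

context dma begin

lemma jj: "a \<in> C \<Longrightarrow> b \<in> C \<Longrightarrow> g \<in> C \<Longrightarrow> (a \<squnion> b) \<squnion> g = (a \<squnion> g) \<squnion> (b \<squnion> g)"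
  using jassoc[of a g "b \<squnion> g"] jlc[of g b g] jassoc[of b g g] jassoc[of a b g] by simp
lemma mm: "a \<in> C \<Longrightarrow> b \<in> C \<Longrightarrow> g \<in> C \<Longrightarrow> (a \<sqinter> b) \<sqinter> g = (a \<sqinter> g) \<sqinter> (b \<sqinter> g)"
  using massoc[of a g "b \<sqinter> g"] mlc[of g b g] massoc[of b g g] massoc[of a b g] by simp

lemma le_mono_m: "x \<in> C \<Longrightarrow> y \<in> C \<Longrightarrow> z \<in> C \<Longrightarrow> le x y \<Longrightarrow> le (x \<sqinter> z) (y \<sqinter> z)"
  by (meson le_mI le_trans m_c m_le1 m_le2)

lemma bj_c: "(\<And>i. i < k \<Longrightarrow> f i \<in> C) \<Longrightarrow> bj M f k \<in> C"
  by (induction k) auto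

lemma bj_dist: "x \<in> C \<Longrightarrow> (\<And>i. i < k \<Longrightarrow> f i \<in> C) \<Longrightarrow> x \<sqinter> bj M f k = bj M (\<lambda>i. x \<sqinter> f i) k"
proof (induction k)
  case 0 thus ?case by simp
next
  case (Suc k)
  have "x \<sqinter> bj M f (Suc k) = x \<sqinter> bj M f k \<squnion> x \<sqinter> f k"
    using Suc.prems bj_c[of k f] by (simp add: dist)
  thus ?case using Suc by simp
qed

lemma bj_ge: "(\<And>i. i < k \<Longrightarrow> f i \<in> C) \<Longrightarrow> i < k \<Longrightarrow> le (f i) (bj M f k)"
proof (induction k)
  case 0 thus ?case by simp
next
  case (Suc k)
  have c: "bj M f k \<in> C" "f k \<in> C" using Suc.prems bj_c[of k f] by auto
  show ?case
  proof (cases "i = k")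
    case True thus ?thesis using c by (simp add: j_ge2)
  next
    case False
    hence "le (f i) (bj M f k)" using Suc by simp
    moreover have "le (bj M f k) (bj M f (Suc k))" using c by (simp add: j_ge1)
    ultimately show ?thesis using c Suc.prems False Suc.prems(2) by (meson le_trans bj_c less_Suc_eq j_c)
  qed
qed

lemma bj_bel: "(\<And>i. i < k \<Longrightarrow> bel (f i)) \<Longrightarrow> bel (bj M f k)"
  by (induction k) (auto intro: bel_j)

lemma bj_sel: assumes "\<And>i. i < k \<Longrightarrow> f i \<in> C" "j < k"
  and "\<And>i. i < k \<Longrightarrow> i \<noteq> j \<Longrightarrow> f i = \<zero>"
  shows "bj M f k = f j"
  using assms
proof (induction k)
  case 0 thus ?case by simp
next
  case (Suc k)
  show ?case
  proof (cases "j = k")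
    case True
    have "bj M f k = \<zero>"
    proof -
      have "\<And>m. m \<le> k \<Longrightarrow> bj M f m = \<zero>"
      proof -
        fix m show "m \<le> k \<Longrightarrow> bj M f m = \<zero>"
          by (induction m) (use Suc.prems True in auto)
      qed
      thus ?thesis by simp
    qed
    thus ?thesis using True Suc.prems by simp
  next
    case False
    hence "bj M f k = f j" using Suc by simp
    thus ?thesis using False Suc.prems by simp
  qed
qed

subsection \<open>Atoms\<close>

lemma ex_min:
  assumes fin: "finite C" and Pb: "P b" and b0: "b \<noteq> \<zero>" and PC: "\<And>z. P z \<Longrightarrow> z \<in> C"
  shows "\<exists>f. P f \<and> f \<noteq> \<zero> \<and> le f b \<and> (\<forall>g. P g \<and> le g f \<longrightarrow> g = \<zero> \<or> g = f)"
proof -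
  let ?S = "\<lambda>f. P f \<and> f \<noteq> \<zero> \<and> le f b"
  let ?m = "\<lambda>f. card {z \<in> C. le z f}"
  have bC: "b \<in> C" using PC Pb .
  have "?S b" using Pb b0 bC by simp
  then obtain f where f: "?S f" and fm: "\<forall>g. ?S g \<longrightarrow> ?m f \<le> ?m g"
    using ex_has_least_nat[of ?S b ?m] by blast
  have fC: "f \<in> C" using f PC by blast
  have "\<forall>g. P g \<and> le g f \<longrightarrow> g = \<zero> \<or> g = f"
  proof (intro allI impI)
    fix g assume g: "P g \<and> le g f"
    have gC: "g \<in> C" using g PC by blast
    show "g = \<zero> \<or> g = f"
    proof (rule ccontr)
      assume ne: "\<not> (g = \<zero> \<or> g = f)"
      have Sg: "?S g" using g ne f le_trans[OF gC fC bC] by blast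
      have sub: "{z \<in> C. le z g} \<subset> {z \<in> C. le z f}"
      proof
        show "{z \<in> C. le z g} \<subseteq> {z \<in> C. le z f}" using g le_trans[OF _ gC fC] by blast
        have "f \<notin> {z \<in> C. le z g}" using ne g le_antisym[OF gC fC] by blast
        moreover have "f \<in> {z \<in> C. le z f}" using fC by simp
        ultimately show "{z \<in> C. le z g} \<noteq> {z \<in> C. le z f}" by blast
      qed
      have "?m g < ?m f" by (rule psubset_card_mono) (use fin sub in auto)
      thus False using fm Sg by (meson not_le)
    qed
  qed
  thus ?thesis using f by blast
qed

definition batom where "batom e \<longleftrightarrow> bel e \<and> e \<noteq> \<zero> \<and> (\<forall>f. bel f \<and> le f e \<longrightarrow> f = \<zero> \<or> f = e)"
definition matom where "matom p \<longleftrightarrow> p \<in> C \<and> p \<noteq> \<zero> \<and> (\<forall>z. z \<in> C \<and> le z p \<longrightarrow> z = \<zero> \<or> z = p)"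

lemma batom_C: "batom e \<Longrightarrow> e \<in> C" by (simp add: batom_def bel_C)

lemma batom_meet: assumes "batom e" "bel f" shows "f \<sqinter> e = \<zero> \<or> f \<sqinter> e = e"
proof -
  have "bel (f \<sqinter> e)" using assms by (simp add: batom_def bel_m)
  moreover have "le (f \<sqinter> e) e" using assms by (simp add: m_le2 bel_C batom_C)
  ultimately show ?thesis using assms(1) unfolding batom_def by blast
qed

lemma matom_meet: assumes "matom p" "y \<in> C" shows "y \<sqinter> p = \<zero> \<or> y \<sqinter> p = p"
proof -
  have "le (y \<sqinter> p) p" using assms by (simp add: m_le2 matom_def)
  thus ?thesis using assms unfolding matom_def by simp
qed

lemma batom_disj: assumes "batom e" "batom e'" "e \<noteq> e'" shows "e \<sqinter> e' = \<zero>"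
proof -
  have c: "e \<in> C" "e' \<in> C" using assms batom_C by auto
  have "e \<sqinter> e' = \<zero> \<or> e \<sqinter> e' = e'" using batom_meet[OF assms(2), of e] assms(1) by (simp add: batom_def)
  moreover have "e' \<sqinter> e = \<zero> \<or> e' \<sqinter> e = e" using batom_meet[OF assms(1), of e'] assms(2) by (simp add: batom_def)
  moreover have "e' \<sqinter> e = e \<sqinter> e'" using c mcomm by simp
  ultimately have "e \<sqinter> e' = \<zero> \<or> (e \<sqinter> e' = e' \<and> e \<sqinter> e' = e)" by auto
  thus ?thesis using assms(3) by auto
qed

lemma ex_batom: assumes "finite C" "bel b" "b \<noteq> \<zero>" shows "\<exists>e. batom e \<and> le e b"
  using ex_min[of bel b] assms bel_C unfolding batom_def by blast

lemma ex_matom: assumes "finite C" "b \<in> C" "b \<noteq> \<zero>" shows "\<exists>p. matom p \<and> le p b"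
  using ex_min[of "\<lambda>z. z \<in> C" b] assms unfolding matom_def by blast

end

definition enc :: "bool \<Rightarrow> bool \<Rightarrow> m1" where
  "enc a b = (if a then (if b then E1 else Ea) else (if b then Eb else E0))"

lemma enc_join: "m1_join (enc a b) (enc c d) = enc (a \<or> c) (b \<or> d)"
  by (cases a; cases b; cases c; cases d) (simp_all add: enc_def)
lemma enc_meet: "m1_meet (enc a b) (enc c d) = enc (a \<and> c) (b \<and> d)"
  by (cases a; cases b; cases c; cases d) (simp_all add: enc_def)
lemma enc_neg: "m1_neg (enc a b) = enc (\<not> b) (\<not> a)"
  by (cases a; cases b) (simp_all add: enc_def)
lemma enc_inj: "enc a b = enc c d \<longleftrightarrow> a = c \<and> b = d"
  by (cases a; cases b; cases c; cases d) (simp_all add: enc_def)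
lemma enc_vals: "enc a b = E0 \<longleftrightarrow> \<not> a \<and> \<not> b" "enc a b = E1 \<longleftrightarrow> a \<and> b"
  "enc a b = Ea \<longleftrightarrow> a \<and> \<not> b" "enc a b = Eb \<longleftrightarrow> \<not> a \<and> b"
  by (cases a; cases b; simp add: enc_def)+

lemma m1_set4: "S \<subseteq> {E0,Ea,Eb,E1} \<Longrightarrow> E0 \<in> S \<Longrightarrow> Ea \<in> S \<Longrightarrow> Eb \<in> S \<Longrightarrow> E1 \<in> S \<Longrightarrow> S = {E0,Ea,Eb,E1}" by blast
lemma m1_set3: "S \<subseteq> {E0,Ea,Eb,E1} \<Longrightarrow> E0 \<in> S \<Longrightarrow> Ea \<in> S \<Longrightarrow> Eb \<notin> S \<Longrightarrow> E1 \<in> S \<Longrightarrow> S = {E0,Ea,E1}" by blast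
lemma m1_set2: "S \<subseteq> {E0,Ea,Eb,E1} \<Longrightarrow> E0 \<in> S \<Longrightarrow> Ea \<notin> S \<Longrightarrow> Eb \<notin> S \<Longrightarrow> E1 \<in> S \<Longrightarrow> S = {E0,E1}" by blast

context dma begin

lemma e_neg_c: assumes "bel e" "c \<in> C" "le c e" shows "e\<degree> \<sqinter> c = \<zero>"
proof -
  have eC: "e \<in> C" using assms bel_C by auto
  have "le (c \<sqinter> e\<degree>) (e \<sqinter> e\<degree>)" using le_mono_m[OF assms(2) eC _ assms(3)] eC by simp
  hence "c \<sqinter> e\<degree> = \<zero>" using bel_mt[OF assms(1)] assms eC le_0_iff by simp
  thus ?thesis using mcomm[of c "e\<degree>"] assms eC by simp
qed

lemma keyK:
  assumes ag: allgen and e: "batom e" and c: "c \<in> C" "c \<noteq> \<zero>" "le c e"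
    and uv: "u \<in> C" "v \<in> C" "u \<sqinter> c = v \<sqinter> c" "(u \<squnion> c\<degree>) \<sqinter> e = (v \<squnion> c\<degree>) \<sqinter> e"
  shows "u \<sqinter> e = v \<sqinter> e"
proof -
  have eC: "e \<in> C" using e batom_C by auto
  have be: "bel e" using e by (simp add: batom_def)
  define \<theta> where "\<theta> = {(x,y). x \<in> C \<and> y \<in> C \<and> x \<sqinter> c = y \<sqinter> c \<and> (x \<squnion> c\<degree>) \<sqinter> e = (y \<squnion> c\<degree>) \<sqinter> e}"
  have np: "x\<degree> \<sqinter> c = (((x \<squnion> c\<degree>) \<sqinter> e)\<degree>) \<sqinter> c" if "x \<in> C" for x
  proof -
    have "((x \<squnion> c\<degree>) \<sqinter> e)\<degree> = (x\<degree> \<sqinter> c) \<squnion> e\<degree>" using that c eC by (simp add: dmm dmj)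
    hence "(((x \<squnion> c\<degree>) \<sqinter> e)\<degree>) \<sqinter> c = (x\<degree> \<sqinter> c) \<sqinter> c \<squnion> e\<degree> \<sqinter> c" using that c eC by (simp add: distr)
    also have "\<dots> = x\<degree> \<sqinter> c" using that c eC e_neg_c[OF be c(1) c(3)] massoc[of "x\<degree>" c c] by simp
    finally show ?thesis by simp
  qed
  have cong: "dm_congruence M \<theta>"
  proof (rule congI)
    show "\<theta> \<subseteq> C \<times> C" by (auto simp: \<theta>_def)
    show "\<And>x. x \<in> C \<Longrightarrow> (x, x) \<in> \<theta>" by (simp add: \<theta>_def)
    show "\<And>x y. (x, y) \<in> \<theta> \<Longrightarrow> (y, x) \<in> \<theta>" by (simp add: \<theta>_def)
    show "\<And>x y z. (x, y) \<in> \<theta> \<Longrightarrow> (y, z) \<in> \<theta> \<Longrightarrow> (x, z) \<in> \<theta>" by (simp add: \<theta>_def)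
    show "\<And>x y u v. (x, y) \<in> \<theta> \<Longrightarrow> (u, v) \<in> \<theta> \<Longrightarrow> (x \<squnion> u, y \<squnion> v) \<in> \<theta>"
    proof -
      fix x y u v assume a: "(x, y) \<in> \<theta>" "(u, v) \<in> \<theta>"
      hence cc: "x \<in> C" "y \<in> C" "u \<in> C" "v \<in> C" and h: "x \<sqinter> c = y \<sqinter> c" "(x \<squnion> c\<degree>) \<sqinter> e = (y \<squnion> c\<degree>) \<sqinter> e"
        "u \<sqinter> c = v \<sqinter> c" "(u \<squnion> c\<degree>) \<sqinter> e = (v \<squnion> c\<degree>) \<sqinter> e" by (auto simp: \<theta>_def)
      have 1: "(x \<squnion> u) \<sqinter> c = (y \<squnion> v) \<sqinter> c" using cc c h by (simp add: distr)
      have "((x \<squnion> u) \<squnion> c\<degree>) \<sqinter> e = (x \<squnion> c\<degree>) \<sqinter> e \<squnion> (u \<squnion> c\<degree>) \<sqinter> e"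
        using cc c eC jj[of x u "c\<degree>"] distr[of e "x \<squnion> c\<degree>" "u \<squnion> c\<degree>"] by simp
      also have "\<dots> = ((y \<squnion> v) \<squnion> c\<degree>) \<sqinter> e"
        using cc c eC h jj[of y v "c\<degree>"] distr[of e "y \<squnion> c\<degree>" "v \<squnion> c\<degree>"] by simp
      finally show "(x \<squnion> u, y \<squnion> v) \<in> \<theta>" using 1 cc by (simp add: \<theta>_def)
    qed
    show "\<And>x y u v. (x, y) \<in> \<theta> \<Longrightarrow> (u, v) \<in> \<theta> \<Longrightarrow> (x \<sqinter> u, y \<sqinter> v) \<in> \<theta>"
    proof -
      fix x y u v assume a: "(x, y) \<in> \<theta>" "(u, v) \<in> \<theta>"
      hence cc: "x \<in> C" "y \<in> C" "u \<in> C" "v \<in> C" and h: "x \<sqinter> c = y \<sqinter> c" "(x \<squnion> c\<degree>) \<sqinter> e = (y \<squnion> c\<degree>) \<sqinter> e"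
        "u \<sqinter> c = v \<sqinter> c" "(u \<squnion> c\<degree>) \<sqinter> e = (v \<squnion> c\<degree>) \<sqinter> e" by (auto simp: \<theta>_def)
      have 1: "(x \<sqinter> u) \<sqinter> c = (y \<sqinter> v) \<sqinter> c" using cc c h mm[of x u c] mm[of y v c] by simp
      have "((x \<sqinter> u) \<squnion> c\<degree>) \<sqinter> e = ((x \<squnion> c\<degree>) \<sqinter> e) \<sqinter> ((u \<squnion> c\<degree>) \<sqinter> e)"
        using cc c eC dist2r[of "c\<degree>" x u] mm[of "x \<squnion> c\<degree>" "u \<squnion> c\<degree>" e] by simp
      also have "\<dots> = ((y \<sqinter> v) \<squnion> c\<degree>) \<sqinter> e"
        using cc c eC h dist2r[of "c\<degree>" y v] mm[of "y \<squnion> c\<degree>" "v \<squnion> c\<degree>" e] by simp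
      finally show "(x \<sqinter> u, y \<sqinter> v) \<in> \<theta>" using 1 cc by (simp add: \<theta>_def)
    qed
    show "\<And>x y. (x, y) \<in> \<theta> \<Longrightarrow> (x\<degree>, y\<degree>) \<in> \<theta>"
    proof -
      fix x y assume a: "(x, y) \<in> \<theta>"
      hence cc: "x \<in> C" "y \<in> C" and h: "x \<sqinter> c = y \<sqinter> c" "(x \<squnion> c\<degree>) \<sqinter> e = (y \<squnion> c\<degree>) \<sqinter> e"
        by (auto simp: \<theta>_def)
      have 1: "x\<degree> \<sqinter> c = y\<degree> \<sqinter> c" using np[OF cc(1)] np[OF cc(2)] h by simp
      have "x\<degree> \<squnion> c\<degree> = y\<degree> \<squnion> c\<degree>" using cc c h(1) dmm[of x c] dmm[of y c] by simp
      thus "(x\<degree>, y\<degree>) \<in> \<theta>" using 1 cc by (simp add: \<theta>_def)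
    qed
  qed
  have "(u,v) \<in> \<theta>" using uv by (simp add: \<theta>_def)
  hence "(u,v) \<in> thI \<theta>" using ag cong unfolding allgen_def by blast
  then obtain f where f: "bel f" "(f, \<zero>) \<in> \<theta>" "u \<squnion> f = v \<squnion> f" by (auto simp: thI_def gen_def)
  have fC: "f \<in> C" using f bel_C by auto
  have fc: "f \<sqinter> c = \<zero>" using f(2) c by (simp add: \<theta>_def)
  have "f \<sqinter> e = \<zero> \<or> f \<sqinter> e = e" using batom_meet[OF e f(1)] .
  moreover have "f \<sqinter> e \<noteq> e"
  proof
    assume fe: "f \<sqinter> e = e"
    have "c = c \<sqinter> e" using c(3) by (simp add: le_def)
    also have "\<dots> = c \<sqinter> (f \<sqinter> e)" using fe by simp
    also have "\<dots> = (f \<sqinter> c) \<sqinter> e" using c fC eC massoc[of c f e] mcomm[of c f] by simp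
    finally show False using fc c eC by simp
  qed
  ultimately have fe: "f \<sqinter> e = \<zero>" by simp
  have "u \<sqinter> e = (u \<squnion> f) \<sqinter> e" using uv fC eC fe by (simp add: distr)
  also have "\<dots> = (v \<squnion> f) \<sqinter> e" using f by simp
  also have "\<dots> = v \<sqinter> e" using uv fC eC fe by (simp add: distr)
  finally show ?thesis .
qed

end

locale fac = dma +
  fixes e p
  assumes e: "batom e" and p: "matom p" and pe: "le p e"
begin

definition q where "q = p\<degree> \<sqinter> e"
definition D where "D = {y \<in> C. le y e}"
definition b1 where "b1 y \<longleftrightarrow> le p y"
definition b2 where "b2 y \<longleftrightarrow> y \<squnion> q = e"
definition phi where "phi y = enc (b1 y) (b2 y)"

lemma eC[simp]: "e \<in> C" using e batom_C by auto
lemma pC[simp]: "p \<in> C" using p by (simp add: matom_def)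
lemma qC[simp]: "q \<in> C" by (simp add: q_def)
lemma be: "bel e" using e by (simp add: batom_def)
lemma e0: "e \<noteq> \<zero>" using e by (simp add: batom_def)
lemma p0: "p \<noteq> \<zero>" using p by (simp add: matom_def)
lemma qe: "le q e" by (simp add: q_def m_le2)
lemma qe': "q \<sqinter> e = q" using qe by (simp add: le_def)
lemma qje: "q \<squnion> e = e" using qe le_j by simp
lemma pme: "p \<sqinter> e = p" using pe by (simp add: le_def)
lemma q_ne_e: "q \<noteq> e"
proof
  assume "q = e"
  hence "p\<degree> \<sqinter> e = e" unfolding q_def .
  hence "le e (p\<degree>)" using mcomm[of "p\<degree>" e] by (simp add: le_def)
  hence "le (p\<degree>\<degree>) (e\<degree>)" using neg_anti[of e "p\<degree>"] by simp
  hence "le p (e\<degree>)" by simp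
  hence "le p (e \<sqinter> e\<degree>)" using pe le_mI by simp
  hence "p = \<zero>" using bel_mt[OF be] le_0_iff by simp
  thus False using p0 by simp
qed

lemma D_I: "y \<in> C \<Longrightarrow> le y e \<Longrightarrow> y \<in> D" by (simp add: D_def)
lemma D_C: "y \<in> D \<Longrightarrow> y \<in> C" by (simp add: D_def)
lemma D_le: "y \<in> D \<Longrightarrow> y \<sqinter> e = y" by (simp add: D_def le_def)

lemma vals1: "y \<in> C \<Longrightarrow> y \<sqinter> p = \<zero> \<or> y \<sqinter> p = p" using matom_meet[OF p] by simp
lemma b1_iff: "y \<in> C \<Longrightarrow> b1 y \<longleftrightarrow> y \<sqinter> p = p" unfolding b1_def le_def using mcomm[of y p] by simp

lemma vals2: assumes "y \<in> D" shows "y \<squnion> q = q \<or> y \<squnion> q = e"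
proof -
  have yC: "y \<in> C" using assms D_C by simp
  have "y\<degree> \<sqinter> p = \<zero> \<or> y\<degree> \<sqinter> p = p" using vals1[of "y\<degree>"] yC by simp
  hence "(y\<degree> \<sqinter> p)\<degree> = \<one> \<or> (y\<degree> \<sqinter> p)\<degree> = p\<degree>" by auto
  hence 1: "y \<squnion> p\<degree> = \<one> \<or> y \<squnion> p\<degree> = p\<degree>" using yC dmm[of "y\<degree>" p] by simp
  have "y \<squnion> q = (y \<squnion> p\<degree>) \<sqinter> (y \<squnion> e)" using yC by (simp add: q_def dist2)
  also have "y \<squnion> e = e" using assms le_j yC by (simp add: D_def)
  finally have "y \<squnion> q = (y \<squnion> p\<degree>) \<sqinter> e" .
  thus ?thesis using 1 by (auto simp: q_def)
qed

lemma b2_false: "y \<in> D \<Longrightarrow> \<not> b2 y \<longleftrightarrow> y \<squnion> q = q" using vals2 q_ne_e b2_def by auto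

lemma Dj: "y \<in> D \<Longrightarrow> z \<in> D \<Longrightarrow> y \<squnion> z \<in> D"
  by (simp add: D_def le_jI)
lemma Dm: "y \<in> D \<Longrightarrow> z \<in> D \<Longrightarrow> y \<sqinter> z \<in> D"
  by (simp add: D_def) (meson eC le_trans m_c m_le1)
lemma Dn: "y \<in> D \<Longrightarrow> y\<degree> \<sqinter> e \<in> D"
  by (simp add: D_def m_le2)
lemma D0: "\<zero> \<in> D" by (simp add: D_def)
lemma De: "e \<in> D" by (simp add: D_def)

lemma b1_join: "y \<in> D \<Longrightarrow> z \<in> D \<Longrightarrow> b1 (y \<squnion> z) \<longleftrightarrow> b1 y \<or> b1 z"
proof -
  assume a: "y \<in> D" "z \<in> D"
  hence c: "y \<in> C" "z \<in> C" using D_C by auto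
  have "(y \<squnion> z) \<sqinter> p = y \<sqinter> p \<squnion> z \<sqinter> p" using c by (simp add: distr)
  thus ?thesis using vals1[OF c(1)] vals1[OF c(2)] b1_iff c p0 by auto
qed
lemma b2_join: "y \<in> D \<Longrightarrow> z \<in> D \<Longrightarrow> b2 (y \<squnion> z) \<longleftrightarrow> b2 y \<or> b2 z"
proof -
  assume a: "y \<in> D" "z \<in> D"
  hence c: "y \<in> C" "z \<in> C" using D_C by auto
  have "(y \<squnion> z) \<squnion> q = (y \<squnion> q) \<squnion> (z \<squnion> q)" using c by (intro jj) simp_all
  thus ?thesis using vals2[OF a(1)] vals2[OF a(2)] q_ne_e qje jcomm[of q e] unfolding b2_def by auto
qed
lemma b1_meet: "y \<in> D \<Longrightarrow> z \<in> D \<Longrightarrow> b1 (y \<sqinter> z) \<longleftrightarrow> b1 y \<and> b1 z"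
  unfolding b1_def using D_C le_m_iff by simp
lemma b2_meet: "y \<in> D \<Longrightarrow> z \<in> D \<Longrightarrow> b2 (y \<sqinter> z) \<longleftrightarrow> b2 y \<and> b2 z"
proof -
  assume a: "y \<in> D" "z \<in> D"
  hence c: "y \<in> C" "z \<in> C" using D_C by auto
  have "(y \<sqinter> z) \<squnion> q = (y \<squnion> q) \<sqinter> (z \<squnion> q)" using c by (simp add: dist2r)
  thus ?thesis using vals2[OF a(1)] vals2[OF a(2)] q_ne_e qe' mcomm[of q e] unfolding b2_def by auto
qed
lemma b1_neg: "y \<in> D \<Longrightarrow> b1 (y\<degree> \<sqinter> e) \<longleftrightarrow> \<not> b2 y"
proof -
  assume a: "y \<in> D"
  hence c: "y \<in> C" "le y e" using D_def by auto
  have "b1 (y\<degree> \<sqinter> e) \<longleftrightarrow> le p (y\<degree>)" unfolding b1_def using c le_m_iff pe by simp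
  also have "\<dots> \<longleftrightarrow> le y (p\<degree>)" using neg_le_iff[of y "p\<degree>"] c by simp
  also have "\<dots> \<longleftrightarrow> le y q" unfolding q_def using c le_m_iff by simp
  also have "\<dots> \<longleftrightarrow> y \<squnion> q = q" using c le_j by simp
  finally show ?thesis using b2_false[OF a] by simp
qed
lemma b2_neg: "y \<in> D \<Longrightarrow> b2 (y\<degree> \<sqinter> e) \<longleftrightarrow> \<not> b1 y"
proof -
  assume a: "y \<in> D"
  hence c: "y \<in> C" using D_def by auto
  have "(y\<degree> \<sqinter> e) \<squnion> q = (y\<degree> \<squnion> p\<degree>) \<sqinter> e" unfolding q_def using c by (simp add: distr)
  also have "\<dots> = (y \<sqinter> p)\<degree> \<sqinter> e" using c by (simp add: dmm)
  finally have h: "(y\<degree> \<sqinter> e) \<squnion> q = (y \<sqinter> p)\<degree> \<sqinter> e" .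
  show ?thesis
  proof (cases "y \<sqinter> p = p")
    case True
    thus ?thesis using h b1_iff[OF c] q_ne_e unfolding b2_def q_def by simp
  next
    case False
    hence "y \<sqinter> p = \<zero>" using vals1[OF c] by simp
    thus ?thesis using h b1_iff[OF c] False unfolding b2_def by simp
  qed
qed

lemma phi_join: "y \<in> D \<Longrightarrow> z \<in> D \<Longrightarrow> phi (y \<squnion> z) = m1_join (phi y) (phi z)"
  by (simp add: phi_def enc_join b1_join b2_join)
lemma phi_meet: "y \<in> D \<Longrightarrow> z \<in> D \<Longrightarrow> phi (y \<sqinter> z) = m1_meet (phi y) (phi z)"
  by (simp add: phi_def enc_meet b1_meet b2_meet)
lemma phi_neg: "y \<in> D \<Longrightarrow> phi (y\<degree> \<sqinter> e) = m1_neg (phi y)"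
  by (simp add: phi_def enc_neg b1_neg b2_neg)
lemma phi_0: "phi \<zero> = E0"
  using p0 q_ne_e by (simp add: phi_def enc_def b1_def b2_def le_0_iff)
lemma phi_e: "phi e = E1"
  using pe qje jcomm[of e q] by (simp add: phi_def enc_def b1_def b2_def)

lemma phi_inj: assumes ag: allgen and y: "y \<in> D" and z: "z \<in> D" and eq: "phi y = phi z" shows "y = z"
proof -
  have c: "y \<in> C" "z \<in> C" using y z D_C by auto
  have bb: "b1 y = b1 z" "b2 y = b2 z" using eq enc_inj unfolding phi_def by auto
  have 1: "y \<sqinter> p = z \<sqinter> p"
  proof (cases "b1 y")
    case True thus ?thesis using bb(1) b1_iff c by simp
  next
    case False thus ?thesis using bb(1) b1_iff c vals1[OF c(1)] vals1[OF c(2)] by simp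
  qed
  have 2: "y \<squnion> q = z \<squnion> q"
  proof (cases "b2 y")
    case True thus ?thesis using bb(2) b2_def by simp
  next
    case False
    hence "\<not> b2 z" using bb(2) by simp
    thus ?thesis using False b2_false[OF y] b2_false[OF z] by simp
  qed
  have r: "(w \<squnion> p\<degree>) \<sqinter> e = w \<squnion> q" if "w \<in> D" for w
    using that D_le[OF that] D_C[OF that] by (simp add: distr q_def)
  have "y \<sqinter> e = z \<sqinter> e"
    by (rule keyK[OF ag e pC p0 pe c 1]) (simp add: r[OF y] r[OF z] 2)
  thus ?thesis using D_le[OF y] D_le[OF z] by simp
qed

lemma img_cases: assumes ag: allgen
  shows "phi ` D \<in> {{E0,E1}, {E0,Ea,E1}, {E0,Ea,Eb,E1}}"
proof -
  let ?S = "phi ` D"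
  have s0: "E0 \<in> ?S" using phi_0 D0 by (metis image_eqI)
  have s1: "E1 \<in> ?S" using phi_e De by (metis image_eqI)
  have ab: "Eb \<notin> ?S" if na: "Ea \<notin> ?S"
  proof
    assume "Eb \<in> ?S"
    then obtain y where y: "y \<in> D" "phi y = Eb" by auto
    have pD: "p \<in> D" using pe by (simp add: D_def)
    have "\<not> le p q"
    proof
      assume "le p q"
      hence "p \<squnion> q = q" using le_j by simp
      hence "phi p = Ea" using q_ne_e by (simp add: phi_def enc_def b1_def b2_def)
      thus False using na pD by (metis image_eqI)
    qed
    hence "q \<sqinter> p = \<zero>" using vals1[OF qC] b1_iff[OF qC] b1_def by auto
    have qD: "q \<in> D" using qe by (simp add: D_def)
    have "phi q = E0" using \<open>\<not> le p q\<close> q_ne_e by (simp add: phi_def enc_def b1_def b2_def)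
    hence "q = \<zero>" using phi_inj[OF ag qD D0] phi_0 by simp
    hence "y = e" using y vals2[OF y(1)] D_C[OF y(1)] enc_vals(4) unfolding phi_def b2_def by auto
    hence "phi y = E1" using phi_e by simp
    thus False using y by simp
  qed
  have sub: "?S \<subseteq> {E0,Ea,Eb,E1}"
  proof
    fix x show "x \<in> {E0,Ea,Eb,E1}" by (cases x) simp_all
  qed
  show ?thesis
  proof (cases "Ea \<in> ?S")
    case True
    show ?thesis
    proof (cases "Eb \<in> ?S")
      case True
      hence "?S = {E0,Ea,Eb,E1}" using m1_set4[OF sub s0 \<open>Ea \<in> ?S\<close> _ s1] by simp
      thus ?thesis by simp
    next
      case False
      hence "?S = {E0,Ea,E1}" using m1_set3[OF sub s0 \<open>Ea \<in> ?S\<close> _ s1] by simp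
      thus ?thesis by simp
    qed
  next
    case False
    hence "?S = {E0,E1}" using m1_set2[OF sub s0 _ _ s1] ab by simp
    thus ?thesis by simp
  qed
qed

end

context dma begin

lemma bj_cong: "(\<And>i. i < k \<Longrightarrow> f i = g i) \<Longrightarrow> bj M f k = bj M g k"
  by (induction k) auto

lemma neg_part: "x \<in> C \<Longrightarrow> bel e \<Longrightarrow> x\<degree> \<sqinter> e = (x \<sqinter> e)\<degree> \<sqinter> e"
proof -
  assume x: "x \<in> C" and be: "bel e"
  have eC: "e \<in> C" using be bel_C by simp
  have "(x \<sqinter> e)\<degree> \<sqinter> e = (x\<degree> \<squnion> e\<degree>) \<sqinter> e" using x eC by (simp add: dmm)
  also have "\<dots> = x\<degree> \<sqinter> e \<squnion> e\<degree> \<sqinter> e" using x eC by (simp add: distr)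
  also have "e\<degree> \<sqinter> e = \<zero>" using bel_mt[OF be] mcomm[of e "e\<degree>"] eC by simp
  finally show ?thesis using x eC by simp
qed

lemma constr:
  assumes fin: "finite C" and ag: allgen
  shows "\<exists>n A. (\<forall>i<n. A i \<in> {M1_two, M1_three, M1}) \<and> dm_isomorphic M (dm_product n A)"
proof -
  have "finite {e. batom e}" using fin batom_C by (metis mem_Collect_eq rev_finite_subset subsetI)
  then obtain es where es: "set es = {e. batom e}" "distinct es" using finite_distinct_list by blast
  define n where "n = length es"
  define ee where "ee i = es ! i" for i
  have eeA: "batom (ee i)" if "i < n" for i using that es(1) nth_mem unfolding ee_def n_def by blast
  have eeC: "ee i \<in> C" if "i < n" for i using eeA[OF that] batom_C by simp
  have eeB: "bel (ee i)" if "i < n" for i using eeA[OF that] by (simp add: batom_def)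
  have eedis: "ee i \<sqinter> ee j = \<zero>" if "i < n" "j < n" "i \<noteq> j" for i j
  proof -
    have "ee i \<noteq> ee j" using that es(2) nth_eq_iff_index_eq unfolding ee_def n_def by blast
    thus ?thesis using batom_disj eeA that by simp
  qed
  define pp where "pp i = (SOME p. matom p \<and> le p (ee i))" for i
  have ppA: "matom (pp i) \<and> le (pp i) (ee i)" if "i < n" for i
  proof -
    have "\<exists>p. matom p \<and> le p (ee i)" using ex_matom[OF fin eeC[OF that]] eeA[OF that] by (simp add: batom_def)
    thus ?thesis unfolding pp_def by (rule someI_ex)
  qed
  have facI: "fac M (ee i) (pp i)" if "i < n" for i
    unfolding fac_def fac_axioms_def using dma_axioms eeA[OF that] ppA[OF that] by simp
  define ph where "ph i = fac.phi M (ee i) (pp i)" for i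
  define DD where "DD i = fac.D M (ee i)" for i
  define A where "A i = restrict_dm M1 (ph i ` DD i)" for i
  have Ain: "A i \<in> {M1_two, M1_three, M1}" if "i < n" for i
  proof -
    have "ph i ` DD i \<in> {{E0,E1}, {E0,Ea,E1}, {E0,Ea,Eb,E1}}"
      unfolding ph_def DD_def by (rule fac.img_cases[OF facI[OF that] ag])
    moreover have "restrict_dm M1 {E0,Ea,Eb,E1} = M1" by (simp add: restrict_dm_def M1_def)
    ultimately show ?thesis unfolding A_def M1_two_def M1_three_def by auto
  qed
  have opsA: "join (A i) = m1_join" "meet (A i) = m1_meet" "neg (A i) = m1_neg"
    "zero (A i) = E0" "one (A i) = E1" "carrier (A i) = ph i ` DD i" for i
    by (simp_all add: A_def restrict_dm_def M1_def)
  let ?s = "bj M ee n"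
  have sC: "?s \<in> C" using bj_c eeC by simp
  have sum1: "?s = \<one>"
  proof (rule ccontr)
    assume ne: "?s \<noteq> \<one>"
    have bs: "bel ?s" using bj_bel eeA by (simp add: batom_def)
    have "?s\<degree> \<noteq> \<zero>"
    proof
      assume "?s\<degree> = \<zero>"
      hence "?s\<degree>\<degree> = \<one>" by simp
      thus False using ne sC by simp
    qed
    then obtain a where a: "batom a" "le a (?s\<degree>)" using ex_batom[OF fin bel_n[OF bs]] by blast
    have "a \<in> set es" using a es(1) by simp
    then obtain i where i: "i < n" "a = ee i" using in_set_conv_nth unfolding ee_def n_def by metis
    have "le a ?s" using bj_ge[of n ee i] eeC i by simp
    hence "le a (?s \<sqinter> ?s\<degree>)" using a sC batom_C le_mI by simp
    hence "a = \<zero>" using bel_mt[OF bs] le_0_iff a batom_C by simp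
    thus False using a by (simp add: batom_def)
  qed
  have decomp: "bj M (\<lambda>i. x \<sqinter> ee i) n = x" if "x \<in> C" for x
    using bj_dist[of x n ee] eeC that sum1 by simp
  define h where "h x = restrict (\<lambda>i. ph i (x \<sqinter> ee i)) {..<n}" for x
  have inD: "x \<sqinter> ee i \<in> DD i" if "x \<in> C" "i < n" for x i
    unfolding DD_def by (rule fac.D_I[OF facI[OF that(2)]]) (simp_all add: that eeC m_le2)
  let ?P = "dm_product n A"
  have carP: "carrier ?P = PiE {..<n} (\<lambda>i. ph i ` DD i)" by (simp add: dm_product_def opsA)
  have inj: "inj_on h C"
  proof (rule inj_onI)
    fix x y assume xy: "x \<in> C" "y \<in> C" "h x = h y"
    have "x \<sqinter> ee i = y \<sqinter> ee i" if i: "i < n" for i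
    proof -
      have "h x i = h y i" using xy by simp
      hence "ph i (x \<sqinter> ee i) = ph i (y \<sqinter> ee i)" using i by (simp add: h_def)
      thus ?thesis using fac.phi_inj[OF facI[OF i] ag] inD xy i unfolding ph_def DD_def by blast
    qed
    hence "bj M (\<lambda>i. x \<sqinter> ee i) n = bj M (\<lambda>i. y \<sqinter> ee i) n" by (rule bj_cong)
    thus "x = y" using decomp xy by simp
  qed
  have img: "h ` C = carrier ?P"
  proof
    show "h ` C \<subseteq> carrier ?P"
    proof
      fix F assume "F \<in> h ` C"
      then obtain x where x: "x \<in> C" "F = h x" by auto
      show "F \<in> carrier ?P" unfolding carP x(2) h_def using inD[OF x(1)] by auto
    qed
    show "carrier ?P \<subseteq> h ` C"
    proof
      fix F assume F: "F \<in> carrier ?P"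
      hence Fi: "F i \<in> ph i ` DD i" if "i < n" for i using that carP by (auto simp: PiE_iff)
      define ys where "ys i = (SOME y. y \<in> DD i \<and> F i = ph i y)" for i
      have ys: "ys i \<in> DD i \<and> F i = ph i (ys i)" if "i < n" for i
      proof -
        have "\<exists>y. y \<in> DD i \<and> F i = ph i y" using Fi[OF that] by auto
        thus ?thesis unfolding ys_def by (rule someI_ex)
      qed
      have ysC: "ys i \<in> C" if "i < n" for i using ys[OF that] fac.D_C[OF facI[OF that]] unfolding DD_def by blast
      have ysle: "ys i \<sqinter> ee i = ys i" if "i < n" for i using ys[OF that] fac.D_le[OF facI[OF that]] unfolding DD_def by blast
      define x where "x = bj M ys n"
      have xC: "x \<in> C" unfolding x_def using bj_c ysC by simp
      have xe: "x \<sqinter> ee j = ys j" if j: "j < n" for j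
      proof -
        have "x \<sqinter> ee j = ee j \<sqinter> x" using xC eeC[OF j] mcomm by simp
        also have "\<dots> = bj M (\<lambda>i. ee j \<sqinter> ys i) n" unfolding x_def using bj_dist[of "ee j" n ys] eeC[OF j] ysC by simp
        also have "\<dots> = ee j \<sqinter> ys j"
        proof (rule bj_sel)
          show "\<And>i. i < n \<Longrightarrow> ee j \<sqinter> ys i \<in> C" using eeC[OF j] ysC by simp
          show "j < n" by fact
          show "ee j \<sqinter> ys i = \<zero>" if "i < n" "i \<noteq> j" for i
          proof -
            have "ee j \<sqinter> ys i = ee j \<sqinter> (ys i \<sqinter> ee i)" using ysle[OF that(1)] by simp
            also have "\<dots> = ys i \<sqinter> (ee j \<sqinter> ee i)" using eeC[OF j] eeC[OF that(1)] ysC[OF that(1)] mlc by simp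
            also have "ee j \<sqinter> ee i = \<zero>" using eedis[OF j that(1)] that(2) by simp
            finally show ?thesis using ysC[OF that(1)] by simp
          qed
        qed
        also have "\<dots> = ys j" using ysle[OF j] mcomm[of "ee j" "ys j"] eeC[OF j] ysC[OF j] by simp
        finally show ?thesis .
      qed
      have "h x = F"
      proof (rule PiE_ext)
        show "h x \<in> PiE {..<n} (\<lambda>i. ph i ` DD i)" unfolding h_def using inD[OF xC] by auto
        show "F \<in> PiE {..<n} (\<lambda>i. ph i ` DD i)" using F carP by simp
        show "\<And>i. i \<in> {..<n} \<Longrightarrow> h x i = F i" unfolding h_def using xe ys by simp
      qed
      thus "F \<in> h ` C" using xC by blast
    qed
  qed
  have iso: "dm_iso M ?P h"
    unfolding dm_iso_def
  proof (intro conjI ballI)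
    show "bij_betw h C (carrier ?P)" using inj img by (simp add: bij_betw_def)
  next
    fix x y assume xy: "x \<in> C" "y \<in> C"
    show "h (x \<squnion> y) = join ?P (h x) (h y)"
      unfolding h_def
      by (simp add: dm_product_def opsA, rule restrict_ext)
         (simp add: ph_def distr[of _ x y] xy eeC fac.phi_join[OF facI, of _ "x \<sqinter> ee _" "y \<sqinter> ee _", symmetric] inD[unfolded DD_def])
    show "h (x \<sqinter> y) = meet ?P (h x) (h y)"
      unfolding h_def
      by (simp add: dm_product_def opsA, rule restrict_ext)
         (simp add: ph_def mm[of x y] xy eeC fac.phi_meet[OF facI, of _ "x \<sqinter> ee _" "y \<sqinter> ee _", symmetric] inD[unfolded DD_def])
  next
    fix x assume x: "x \<in> C"
    show "h (x\<degree>) = neg ?P (h x)"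
      unfolding h_def
      by (simp add: dm_product_def opsA, rule restrict_ext)
         (simp add: ph_def neg_part[OF x eeB] fac.phi_neg[OF facI, of _ "x \<sqinter> ee _", symmetric] inD[unfolded DD_def] x)
  next
    show "h \<zero> = zero ?P"
      unfolding h_def
      by (simp add: dm_product_def opsA, rule restrict_ext)
         (simp add: ph_def eeC fac.phi_0[OF facI])
    show "h \<one> = one ?P"
      unfolding h_def
      by (simp add: dm_product_def opsA, rule restrict_ext)
         (simp add: ph_def eeC fac.phi_e[OF facI])
  qed
  show ?thesis using Ain iso unfolding dm_isomorphic_def by blast
qed

end

lemma congI_gen:
  assumes a1: "\<theta> \<subseteq> carrier N \<times> carrier N" and a2: "\<And>x. x \<in> carrier N \<Longrightarrow> (x,x) \<in> \<theta>"
    and a3: "\<And>x y. (x,y) \<in> \<theta> \<Longrightarrow> (y,x) \<in> \<theta>"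
    and a4: "\<And>x y z. (x,y) \<in> \<theta> \<Longrightarrow> (y,z) \<in> \<theta> \<Longrightarrow> (x,z) \<in> \<theta>"
    and a5: "\<And>x y u v. (x,y) \<in> \<theta> \<Longrightarrow> (u,v) \<in> \<theta> \<Longrightarrow> (join N x u, join N y v) \<in> \<theta>"
    and a6: "\<And>x y u v. (x,y) \<in> \<theta> \<Longrightarrow> (u,v) \<in> \<theta> \<Longrightarrow> (meet N x u, meet N y v) \<in> \<theta>"
    and a7: "\<And>x y. (x,y) \<in> \<theta> \<Longrightarrow> (neg N x, neg N y) \<in> \<theta>"
  shows "dm_congruence N \<theta>"
proof -
  have "refl_on (carrier N) \<theta>" using a2 by (simp add: refl_on_def)
  moreover have "sym \<theta>" using a3 by (simp add: sym_def)
  moreover have "trans \<theta>" using a4 by (meson transI)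
  ultimately have "equiv (carrier N) \<theta>" using a1 by (simp add: equiv_def)
  thus ?thesis unfolding dm_congruence_def using a5 a6 a7 by simp
qed

lemma congD_gen:
  assumes h: "dm_congruence N \<theta>"
  shows "\<theta> \<subseteq> carrier N \<times> carrier N" "\<And>x. x \<in> carrier N \<Longrightarrow> (x,x) \<in> \<theta>"
    "\<And>x y. (x,y) \<in> \<theta> \<Longrightarrow> (y,x) \<in> \<theta>"
    "\<And>x y z. (x,y) \<in> \<theta> \<Longrightarrow> (y,z) \<in> \<theta> \<Longrightarrow> (x,z) \<in> \<theta>"
    "\<And>x y u v. (x,y) \<in> \<theta> \<Longrightarrow> (u,v) \<in> \<theta> \<Longrightarrow> (join N x u, join N y v) \<in> \<theta>"
    "\<And>x y u v. (x,y) \<in> \<theta> \<Longrightarrow> (u,v) \<in> \<theta> \<Longrightarrow> (meet N x u, meet N y v) \<in> \<theta>"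
    "\<And>x y. (x,y) \<in> \<theta> \<Longrightarrow> (neg N x, neg N y) \<in> \<theta>"
proof -
  have eq: "equiv (carrier N) \<theta>" using h unfolding dm_congruence_def by simp
  have r: "refl_on (carrier N) \<theta>" and s: "sym \<theta>" and t: "trans \<theta>" and sub: "\<theta> \<subseteq> carrier N \<times> carrier N"
    using eq by (simp_all add: equiv_def)
  show "\<theta> \<subseteq> carrier N \<times> carrier N" using sub .
  show "\<And>x. x \<in> carrier N \<Longrightarrow> (x,x) \<in> \<theta>" using r by (simp add: refl_on_def)
  show "\<And>x y. (x,y) \<in> \<theta> \<Longrightarrow> (y,x) \<in> \<theta>" using s by (rule symD)
  show "\<And>x y z. (x,y) \<in> \<theta> \<Longrightarrow> (y,z) \<in> \<theta> \<Longrightarrow> (x,z) \<in> \<theta>" using t by (rule transD)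
  have c: "\<forall>x y u v. (x, y) \<in> \<theta> \<longrightarrow> (u, v) \<in> \<theta> \<longrightarrow>
        (join N x u, join N y v) \<in> \<theta> \<and> (meet N x u, meet N y v) \<in> \<theta>"
    and n: "\<forall>x y. (x, y) \<in> \<theta> \<longrightarrow> (neg N x, neg N y) \<in> \<theta>" using h unfolding dm_congruence_def by simp_all
  show "\<And>x y u v. (x,y) \<in> \<theta> \<Longrightarrow> (u,v) \<in> \<theta> \<Longrightarrow> (join N x u, join N y v) \<in> \<theta>" using c by blast
  show "\<And>x y u v. (x,y) \<in> \<theta> \<Longrightarrow> (u,v) \<in> \<theta> \<Longrightarrow> (meet N x u, meet N y v) \<in> \<theta>" using c by blast
  show "\<And>x y. (x,y) \<in> \<theta> \<Longrightarrow> (neg N x, neg N y) \<in> \<theta>" using n by blast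
qed

context dma begin

lemma transport:
  assumes iso: "dm_iso M P h"
    and PG: "\<And>\<theta>' X Y. dm_congruence P \<theta>' \<Longrightarrow> (X,Y) \<in> \<theta>' \<Longrightarrow>
      \<exists>E. E \<in> carrier P \<and> join P E (neg P E) = one P \<and> (E, zero P) \<in> \<theta>' \<and> join P X E = join P Y E"
  shows allgen
  unfolding allgen_def
proof (intro allI impI subsetI)
  fix \<theta> pr assume th: "dm_congruence M \<theta>" and pr: "pr \<in> \<theta>"
  have bij: "bij_betw h C (carrier P)" using iso by (simp add: dm_iso_def)
  have inj: "inj_on h C" and img: "h ` C = carrier P" using bij by (simp_all add: bij_betw_def)
  have hj: "h (x \<squnion> y) = join P (h x) (h y)" and hm: "h (x \<sqinter> y) = meet P (h x) (h y)"
    if "x \<in> C" "y \<in> C" for x y using iso that by (simp_all add: dm_iso_def)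
  have hn: "h (x\<degree>) = neg P (h x)" if "x \<in> C" for x using iso that by (simp add: dm_iso_def)
  have h0: "h \<zero> = zero P" and h1: "h \<one> = one P" using iso by (simp_all add: dm_iso_def)
  have hinj: "x = y" if "x \<in> C" "y \<in> C" "h x = h y" for x y using inj that by (simp add: inj_on_def)
  have thC: "\<theta> \<subseteq> C \<times> C" using congD(1)[OF th] .
  define \<theta>' where "\<theta>' = (\<lambda>(x,y). (h x, h y)) ` \<theta>"
  have mem': "(h x, h y) \<in> \<theta>'" if "(x,y) \<in> \<theta>" for x y using that unfolding \<theta>'_def by force
  have memE: "\<exists>x y. (x,y) \<in> \<theta> \<and> X = h x \<and> Y = h y" if "(X,Y) \<in> \<theta>'" for X Y
    using that unfolding \<theta>'_def by auto
  have memD: "(x,y) \<in> \<theta>" if hx: "(h x, h y) \<in> \<theta>'" "x \<in> C" "y \<in> C" for x y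
  proof -
    have "\<exists>a b. (a,b) \<in> \<theta> \<and> h x = h a \<and> h y = h b" using memE[OF hx(1)] .
    then obtain a b where ab: "(a,b) \<in> \<theta>" "h x = h a" "h y = h b" by blast
    have "a \<in> C" "b \<in> C" using ab(1) thC by auto
    hence "a = x" "b = y" using hinj ab hx by metis+
    thus ?thesis using ab by simp
  qed
  have cong': "dm_congruence P \<theta>'"
  proof (rule congI_gen)
    show "\<theta>' \<subseteq> carrier P \<times> carrier P" unfolding \<theta>'_def using thC img by auto
    show "(X, X) \<in> \<theta>'" if hx: "X \<in> carrier P" for X
    proof -
      obtain x where "x \<in> C" "X = h x" using hx img by auto
      thus ?thesis using mem' congD(2)[OF th] by simp
    qed
    show "(Y, X) \<in> \<theta>'" if "(X, Y) \<in> \<theta>'" for X Y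
      using memE[OF that] mem' congD(3)[OF th] by blast
    show "(X, Z) \<in> \<theta>'" if hx: "(X, Y) \<in> \<theta>'" "(Y, Z) \<in> \<theta>'" for X Y Z
    proof -
      obtain a b where ab: "(a,b) \<in> \<theta>" "X = h a" "Y = h b" using memE[OF hx(1)] by blast
      obtain b' c where bc: "(b',c) \<in> \<theta>" "Y = h b'" "Z = h c" using memE[OF hx(2)] by blast
      have "b = b'" using hinj ab bc thC by blast
      thus ?thesis using congD(4)[OF th ab(1)] bc ab mem' by simp
    qed
    show "(join P X U, join P Y V) \<in> \<theta>'" if hx: "(X, Y) \<in> \<theta>'" "(U, V) \<in> \<theta>'" for X Y U V
    proof -
      obtain a b where ab: "(a,b) \<in> \<theta>" "X = h a" "Y = h b" using memE[OF hx(1)] by blast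
      obtain c d where cd: "(c,d) \<in> \<theta>" "U = h c" "V = h d" using memE[OF hx(2)] by blast
      have "a \<in> C" "b \<in> C" "c \<in> C" "d \<in> C" using ab cd thC by auto
      thus ?thesis using mem'[OF congD(5)[OF th ab(1) cd(1)]] ab cd hj by simp
    qed
    show "(meet P X U, meet P Y V) \<in> \<theta>'" if hx: "(X, Y) \<in> \<theta>'" "(U, V) \<in> \<theta>'" for X Y U V
    proof -
      obtain a b where ab: "(a,b) \<in> \<theta>" "X = h a" "Y = h b" using memE[OF hx(1)] by blast
      obtain c d where cd: "(c,d) \<in> \<theta>" "U = h c" "V = h d" using memE[OF hx(2)] by blast
      have "a \<in> C" "b \<in> C" "c \<in> C" "d \<in> C" using ab cd thC by auto
      thus ?thesis using mem'[OF congD(6)[OF th ab(1) cd(1)]] ab cd hm by simp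
    qed
    show "(neg P X, neg P Y) \<in> \<theta>'" if hx: "(X, Y) \<in> \<theta>'" for X Y
    proof -
      obtain a b where ab: "(a,b) \<in> \<theta>" "X = h a" "Y = h b" using memE[OF hx(1)] by blast
      have "a \<in> C" "b \<in> C" using ab thC by auto
      thus ?thesis using mem'[OF congD(7)[OF th ab(1)]] ab hn by simp
    qed
  qed
  obtain x y where xy: "pr = (x,y)" "(x,y) \<in> \<theta>" using pr by (cases pr) auto
  have c: "x \<in> C" "y \<in> C" using xy thC by auto
  obtain E where E: "E \<in> carrier P" "join P E (neg P E) = one P" "(E, zero P) \<in> \<theta>'"
      "join P (h x) E = join P (h y) E"
    using PG[OF cong' mem'[OF xy(2)]] by blast
  obtain e where e: "e \<in> C" "E = h e" using E(1) img by auto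
  have "h (e \<squnion> e\<degree>) = h \<one>" using E(2) e hj hn h1 by simp
  hence "e \<squnion> e\<degree> = \<one>" using hinj e by simp
  hence be: "bel e" using e by (simp add: bel_def)
  have "(e, \<zero>) \<in> \<theta>" using memD[of e \<zero>] E(3) e h0 by simp
  moreover have "x \<squnion> e = y \<squnion> e" using E(4) e c hj hinj[of "x \<squnion> e" "y \<squnion> e"] by simp
  ultimately show "pr \<in> thI \<theta>" using xy c be unfolding thI_def gen_def by blast
qed

end

lemma m1_meet_E1[simp]: "m1_meet x E1 = x" by (cases x) simp_all
lemma m1_meet_E0[simp]: "m1_meet x E0 = E0" by (cases x) simp_all
lemma m1_join_E1[simp]: "m1_join x E1 = E1" by (cases x) simp_all
lemma m1_join_E0[simp]: "m1_join x E0 = x" by (cases x) simp_all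

lemma A_ops: assumes "A \<in> {M1_two, M1_three, M1}"
  shows "join A = m1_join" "meet A = m1_meet" "neg A = m1_neg" "zero A = E0" "one A = E1"
    "carrier A \<in> {{E0,E1}, {E0,Ea,E1}, {E0,Ea,Eb,E1}}"
  using assms by (auto simp: M1_two_def M1_three_def restrict_dm_def M1_def)

lemma car_closed: assumes "Cs \<in> {{E0,E1}, {E0,Ea,E1}, {E0,Ea,Eb,E1}}" "s \<in> Cs" "t \<in> Cs"
  shows "m1_join s t \<in> Cs" "m1_meet s t \<in> Cs" "m1_neg s \<in> Cs" "E0 \<in> Cs" "E1 \<in> Cs"
  using assms by auto

lemma carE: "Cs \<in> {{E0,E1}, {E0,Ea,E1}, {E0,Ea,Eb,E1}} \<Longrightarrow> E0 \<in> Cs"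
  "Cs \<in> {{E0,E1}, {E0,Ea,E1}, {E0,Ea,Eb,E1}} \<Longrightarrow> E1 \<in> Cs" by auto

lemma m1_simple:
  assumes Cs: "Cs \<in> {{E0,E1}, {E0,Ea,E1}, {E0,Ea,Eb,E1}}"
    and st: "(s,t) \<in> \<rho>" "s \<in> Cs" "t \<in> Cs" "s \<noteq> t"
    and sym: "\<And>a b. (a,b) \<in> \<rho> \<Longrightarrow> (b,a) \<in> \<rho>"
    and tr: "\<And>a b c. (a,b) \<in> \<rho> \<Longrightarrow> (b,c) \<in> \<rho> \<Longrightarrow> (a,c) \<in> \<rho>"
    and cm: "\<And>a b r. (a,b) \<in> \<rho> \<Longrightarrow> r \<in> Cs \<Longrightarrow> (m1_meet a r, m1_meet b r) \<in> \<rho>"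
    and cn: "\<And>a b. (a,b) \<in> \<rho> \<Longrightarrow> (m1_neg a, m1_neg b) \<in> \<rho>"
  shows "(E0,E1) \<in> \<rho>"
proof -
  have Z: "(E0,E1) \<in> \<rho>" if h: "(E0,x) \<in> \<rho>" "x = Ea \<or> x = Eb" for x
  proof -
    have "(E1, x) \<in> \<rho>" using cn[OF h(1)] h(2) by auto
    thus ?thesis using tr[OF h(1) sym] by blast
  qed
  have W: "(E0,E1) \<in> \<rho>" if h: "(x,E1) \<in> \<rho>" "x = Ea \<or> x = Eb" for x
  proof -
    have "(x, E0) \<in> \<rho>" using cn[OF h(1)] h(2) by auto
    thus ?thesis using Z h(2) sym by blast
  qed
  have Z1: "(E0,Ea) \<in> \<rho> \<Longrightarrow> (E0,E1) \<in> \<rho>" "(E0,Eb) \<in> \<rho> \<Longrightarrow> (E0,E1) \<in> \<rho>"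
    "(Ea,E0) \<in> \<rho> \<Longrightarrow> (E0,E1) \<in> \<rho>" "(Eb,E0) \<in> \<rho> \<Longrightarrow> (E0,E1) \<in> \<rho>"
    "(Ea,E1) \<in> \<rho> \<Longrightarrow> (E0,E1) \<in> \<rho>" "(Eb,E1) \<in> \<rho> \<Longrightarrow> (E0,E1) \<in> \<rho>"
    "(E1,Ea) \<in> \<rho> \<Longrightarrow> (E0,E1) \<in> \<rho>" "(E1,Eb) \<in> \<rho> \<Longrightarrow> (E0,E1) \<in> \<rho>"
    "(E1,E0) \<in> \<rho> \<Longrightarrow> (E0,E1) \<in> \<rho>"
    using Z W sym by blast+
  have all: "Cs = {E0,Ea,Eb,E1}" if "Eb \<in> Cs" using Cs that by auto
  have Z2: "(Ea,Eb) \<in> \<rho> \<Longrightarrow> Eb \<in> Cs \<Longrightarrow> (E0,E1) \<in> \<rho>"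
  proof -
    assume a: "(Ea,Eb) \<in> \<rho>" "Eb \<in> Cs"
    have EaC: "Ea \<in> Cs" using all[OF a(2)] by simp
    have "(m1_meet Ea Ea, m1_meet Eb Ea) \<in> \<rho>" using cm[OF a(1) EaC] .
    thus ?thesis using Z1(3) by simp
  qed
  have Z3: "(Eb,Ea) \<in> \<rho> \<Longrightarrow> Eb \<in> Cs \<Longrightarrow> (E0,E1) \<in> \<rho>"
  proof -
    assume a: "(Eb,Ea) \<in> \<rho>" "Eb \<in> Cs"
    have "(m1_meet Eb Eb, m1_meet Ea Eb) \<in> \<rho>" using cm[OF a(1) a(2)] .
    thus ?thesis using Z1(4) by simp
  qed
  show ?thesis
    using st Z1 Z2 Z3 by (cases s; cases t) simp_all
qed

lemma prod_gen:
  fixes A :: "nat \<Rightarrow> m1 dm"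
  assumes A3: "\<forall>i<n. A i \<in> {M1_two, M1_three, M1}"
    and th: "dm_congruence (dm_product n A) \<theta>" and XY: "(X,Y) \<in> \<theta>"
  shows "\<exists>E. E \<in> carrier (dm_product n A) \<and> join (dm_product n A) E (neg (dm_product n A) E) = one (dm_product n A)
     \<and> (E, zero (dm_product n A)) \<in> \<theta> \<and> join (dm_product n A) X E = join (dm_product n A) Y E"
proof -
  define P where "P = dm_product n A"
  note AO = A_ops[OF A3[rule_format]]
  have jP: "join P F G = restrict (\<lambda>i. m1_join (F i) (G i)) {..<n}" for F G
    unfolding P_def dm_product_def by (simp, rule restrict_ext) (simp add: AO)
  have mP: "meet P F G = restrict (\<lambda>i. m1_meet (F i) (G i)) {..<n}" for F G
    unfolding P_def dm_product_def by (simp, rule restrict_ext) (simp add: AO)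
  have nP: "neg P F = restrict (\<lambda>i. m1_neg (F i)) {..<n}" for F
    unfolding P_def dm_product_def by (simp, rule restrict_ext) (simp add: AO)
  have zP: "zero P = restrict (\<lambda>i. E0) {..<n}"
    unfolding P_def dm_product_def by (simp, rule restrict_ext) (simp add: AO)
  have oP: "one P = restrict (\<lambda>i. E1) {..<n}"
    unfolding P_def dm_product_def by (simp, rule restrict_ext) (simp add: AO)
  have carP: "carrier P = PiE {..<n} (\<lambda>i. carrier (A i))" by (simp add: P_def dm_product_def)
  have cc: "carrier (A i) \<in> {{E0,E1}, {E0,Ea,E1}, {E0,Ea,Eb,E1}}" if "i < n" for i using AO(6) that by simp
  have thP: "dm_congruence P \<theta>" using th P_def by simp
  note cg = congD_gen[OF thP]
  define vec where "vec i s = restrict (\<lambda>j. if j = i then s else E0) {..<n}" for i s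
  have vec_in: "vec i s \<in> carrier P" if "i < n" "s \<in> carrier (A i)" for i s
    unfolding carP vec_def using that carE(1)[OF cc] by (auto simp: PiE_iff)
  have mvec: "meet P X (vec i E1) = vec i (X i)" for X i
    unfolding mP vec_def by (rule restrict_ext) simp
  have jvec: "join P (vec i s) (vec i t) = vec i (m1_join s t)" for i s t
    unfolding jP vec_def by (rule restrict_ext) simp
  have mvec2: "meet P (vec i s) (vec i t) = vec i (m1_meet s t)" for i s t
    unfolding mP vec_def by (rule restrict_ext) simp
  have nvec: "meet P (neg P (vec i s)) (vec i E1) = vec i (m1_neg s)" for i s
    unfolding mP nP vec_def by (rule restrict_ext) simp
  have vec0: "vec i E0 = zero P" for i
    unfolding zP vec_def by (rule restrict_ext) simp
  have XYC: "X \<in> carrier P" "Y \<in> carrier P" using cg(1) XY by auto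
  have stepa: "(vec i E1, zero P) \<in> \<theta>" if i: "i < n" "X i \<noteq> Y i" for i
  proof -
    let ?Cs = "carrier (A i)"
    define \<rho> where "\<rho> = {(s,t). s \<in> ?Cs \<and> t \<in> ?Cs \<and> (vec i s, vec i t) \<in> \<theta>}"
    have uC: "vec i E1 \<in> carrier P" using vec_in[OF i(1)] carE(2)[OF cc[OF i(1)]] by simp
    have "(meet P X (vec i E1), meet P Y (vec i E1)) \<in> \<theta>" using cg(6)[OF XY cg(2)[OF uC]] .
    hence "(vec i (X i), vec i (Y i)) \<in> \<theta>" using mvec by simp
    moreover have "X i \<in> ?Cs" "Y i \<in> ?Cs" using XYC i(1) carP by (auto simp: PiE_iff)
    ultimately have st: "(X i, Y i) \<in> \<rho>" unfolding \<rho>_def by simp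
    have "(E0, E1) \<in> \<rho>"
    proof (rule m1_simple[OF cc[OF i(1)] st _ _ i(2)])
      show "X i \<in> ?Cs" "Y i \<in> ?Cs" using XYC i(1) carP by (auto simp: PiE_iff)
      show "(b, a) \<in> \<rho>" if "(a, b) \<in> \<rho>" for a b using that cg(3) unfolding \<rho>_def by auto
      show "(a, c) \<in> \<rho>" if "(a, b) \<in> \<rho>" "(b, c) \<in> \<rho>" for a b c using that cg(4) unfolding \<rho>_def by auto
      show "(m1_meet a r, m1_meet b r) \<in> \<rho>" if h: "(a, b) \<in> \<rho>" "r \<in> ?Cs" for a b r
      proof -
        have ab: "a \<in> ?Cs" "b \<in> ?Cs" "(vec i a, vec i b) \<in> \<theta>" using h(1) unfolding \<rho>_def by auto
        have "(meet P (vec i a) (vec i r), meet P (vec i b) (vec i r)) \<in> \<theta>"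
          using cg(6)[OF ab(3) cg(2)[OF vec_in[OF i(1) h(2)]]] .
        thus ?thesis unfolding \<rho>_def mvec2 using car_closed(2)[OF cc[OF i(1)]] ab h(2) by simp
      qed
      show "(m1_neg a, m1_neg b) \<in> \<rho>" if h: "(a, b) \<in> \<rho>" for a b
      proof -
        have ab: "a \<in> ?Cs" "b \<in> ?Cs" "(vec i a, vec i b) \<in> \<theta>" using h(1) unfolding \<rho>_def by auto
        have "(meet P (neg P (vec i a)) (vec i E1), meet P (neg P (vec i b)) (vec i E1)) \<in> \<theta>"
          using cg(6)[OF cg(7)[OF ab(3)] cg(2)[OF uC]] .
        thus ?thesis unfolding \<rho>_def nvec using car_closed(3)[OF cc[OF i(1)]] ab by simp
      qed
    qed
    hence "(vec i E0, vec i E1) \<in> \<theta>" unfolding \<rho>_def by simp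
    thus ?thesis using cg(3) vec0 by metis
  qed
  define S where "S = {i. i < n \<and> X i \<noteq> Y i}"
  define ET where "ET T = restrict (\<lambda>j. if j \<in> T then E1 else E0) {..<n}" for T
  have zC: "zero P \<in> carrier P" unfolding zP carP using carE(1)[OF cc] by (auto simp: PiE_iff)
  have ETS: "(ET T, zero P) \<in> \<theta>" if "finite T" "T \<subseteq> S" for T
    using that
  proof (induction T rule: finite_induct)
    case empty
    have "ET {} = zero P" unfolding ET_def zP by (rule restrict_ext) simp
    thus ?case using cg(2)[OF zC] by simp
  next
    case (insert i T)
    have i: "i < n" "X i \<noteq> Y i" using insert.prems by (auto simp: S_def)
    have "ET (insert i T) = join P (vec i E1) (ET T)"
      unfolding ET_def jP vec_def by (rule restrict_ext) simp
    moreover have "join P (zero P) (zero P) = zero P" unfolding jP zP by (rule restrict_ext) simp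
    ultimately show ?case using cg(5)[OF stepa[OF i] insert.IH] insert.prems by simp
  qed
  have fS: "finite S" unfolding S_def by simp
  let ?E = "ET S"
  have EC: "?E \<in> carrier P" unfolding ET_def carP using carE[OF cc] by (auto simp: PiE_iff)
  have Eb: "join P ?E (neg P ?E) = one P" unfolding ET_def jP nP oP by (rule restrict_ext) simp
  have Ej: "join P X ?E = join P Y ?E" unfolding ET_def jP by (rule restrict_ext) (auto simp: S_def)
  show ?thesis using EC Eb ETS[OF fS] Ej unfolding P_def by blast
qed

theorem mainTheorem3:
  fixes M :: "'a dm"
  assumes "de_morgan_algebra M" and "finite (carrier M)"
  shows "perfect_extension M (boolean_skeleton M) \<longleftrightarrow>
    (\<exists>n A. (\<forall>i<n. A i \<in> {M1_two, M1_three, M1}) \<and> dm_isomorphic M (dm_product n A))"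
proof -
  interpret dma M using assms(1) by (rule dma.intro)
  show ?thesis
  proof
    assume "perfect_extension M (boolean_skeleton M)"
    hence ag: allgen using perfect_iff by simp
    show "\<exists>n A. (\<forall>i<n. A i \<in> {M1_two, M1_three, M1}) \<and> dm_isomorphic M (dm_product n A)"
      using constr[OF assms(2) ag] .
  next
    assume "\<exists>n A. (\<forall>i<n. A i \<in> {M1_two, M1_three, M1}) \<and> dm_isomorphic M (dm_product n A)"
    then obtain n and A :: "nat \<Rightarrow> m1 dm" where A3: "\<forall>i<n. A i \<in> {M1_two, M1_three, M1}"
      and iso: "dm_isomorphic M (dm_product n A)" by blast
    obtain h where h: "dm_iso M (dm_product n A) h" using iso unfolding dm_isomorphic_def by blast
    have ag: allgen
      by (rule transport[OF h]) (rule prod_gen[OF A3])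
    thus "perfect_extension M (boolean_skeleton M)" using perfect_iff by simp
  qed
qed

end
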